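(* Let $\hat y:\Lambda\to\mathbb R$ satisfy $\mathrm{dist}(D\hat y_b,\mathbb Z+\tfrac12)\ge\epsilon$ for all $b\in\mathcal B$, for some $\epsilon>0$, and suppose that the linear functional $\langle\delta\mathcal E(0),v\rangle:=\sum_{b\in\mathcal B}\psi'(D\hat y_b)Dv_b$ is bounded, i.e. there is $C$ with $\langle\delta\mathcal E(0),v\rangle\le C\|Dv\|_2$ for all $v\in\mathscr W_0$. Then $\mathcal E(u):=\sum_{b\in\mathcal B}[\psi(D\hat y_b+Du_b)-\psi(D\hat y_b)]$, $\mathcal E:\mathscr W_0\to\mathbb R$, is continuous with respect to the norm $\|D\cdot\|_2$; hence there exists a unique continuous extension of $\mathcal E$ to $\dot{\mathscr W}^{1,2}$.
   Context: $\mathsf R_6$ rotation by $\pi/3$, $a_1=(1,0)^T$, $a_i=\mathsf R_6^{i-1}a_1$, $\Lambda:=(\tfrac12,\tfrac{\sqrt3}{6})^T+\{ma_1+na_2:m,n\in\mathbb Z\}$. Bonds $\mathcal B=\{(\xi,\eta)\in\Lambda^2:|\xi-\eta|=1\}$ (ordered), $Dy_b=y(\eta)-y(\xi)$, $\|Dv\|_2=(\sum_{b\in\mathcal B}|Dv_b|^2)^{1/2}$. $\xi_0=(0,\sqrt3/3)^T$; $\mathscr W_0=\{v:\Lambda\to\mathbb R: v(\xi_0)=0,\ \{b:Dv_b\neq0\}$ bounded$\}$; $\dot{\mathscr W}^{1,2}=\{v:v(\xi_0)=0,\ Dv\in\ell^2(\mathcal B)\}$, in which $\mathscr W_0$ is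 dense. The potential $\psi\in C(\mathbb R)\cap C^4(\mathbb R\setminus(\mathbb Z+\tfrac12))$ satisfies: ($\psi$1) 1-periodic; ($\psi$2) $\psi$ and $\psi(\tfrac12+\cdot)$ even; ($\psi$3) $\psi(r)=0$ iff $r\in\mathbb Z$; ($\psi$4) $\psi''(0)=\mu>0$; ($\psi$5) $\psi(x)\ge\frac12\psi''(0)x^2$ on $[-\frac12,\frac12]$. *)

theory Defs
  imports "HOL-Analysis.Analysis"
begin

type_synonym pt = "real \<times> real"

definition R6 :: "pt \<Rightarrow> pt" where
  "R6 p = (cos (pi/3) * fst p - sin (pi/3) * snd p, sin (pi/3) * fst p + cos (pi/3) * snd p)"

definition a1 :: pt where "a1 = (1, 0)"
definition a2 :: pt where "a2 = R6 a1"

definition Lam :: "pt set" where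
  "Lam = {(1/2, sqrt 3 / 6) + of_int m *\<^sub>R a1 + of_int n *\<^sub>R a2 | m n :: int. True}"

definition Bonds :: "(pt \<times> pt) set" where
  "Bonds = {(\<xi>, \<eta>). \<xi> \<in> Lam \<and> \<eta> \<in> Lam \<and> dist \<xi> \<eta> = 1}"

definition Dif :: "(pt \<Rightarrow> real) \<Rightarrow> pt \<times> pt \<Rightarrow> real" where
  "Dif y b = y (snd b) - y (fst b)"

definition normD :: "(pt \<Rightarrow> real) \<Rightarrow> real" where
  "normD v = sqrt (\<Sum>\<^sub>\<infinity> b\<in>Bonds. (Dif v b)\<^sup>2)"

definition xi0 :: pt where "xi0 = (0, sqrt 3 / 3)"

text \<open>Functions on the lattice are represented as functions on the plane vanishing off Lam.\<close>
definition W0 :: "(pt \<Rightarrow> real) set" where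
  "W0 = {v. (\<forall>x. x \<notin> Lam \<longrightarrow> v x = 0) \<and> v xi0 = 0 \<and> bounded {b \<in> Bonds. Dif v b \<noteq> 0}}"

definition W12 :: "(pt \<Rightarrow> real) set" where
  "W12 = {v. (\<forall>x. x \<notin> Lam \<longrightarrow> v x = 0) \<and> v xi0 = 0 \<and> (\<lambda>b. (Dif v b)\<^sup>2) summable_on Bonds}"

definition C4_on :: "real set \<Rightarrow> (real \<Rightarrow> real) \<Rightarrow> bool" where
  "C4_on S f \<longleftrightarrow> (\<forall>k<4. \<forall>x\<in>S. ((deriv ^^ k) f) differentiable (at x))
                  \<and> continuous_on S ((deriv ^^ 4) f)"

definition half_ints :: "real set" where
  "half_ints = {of_int k + 1/2 | k. True}"

definition energy :: "(real \<Rightarrow> real) \<Rightarrow> (pt \<Rightarrow> real) \<Rightarrow> (pt \<Rightarrow> real) \<Rightarrow> real" where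
  "energy \<psi> yhat u = (\<Sum>\<^sub>\<infinity> b\<in>Bonds. \<psi> (Dif yhat b + Dif u b) - \<psi> (Dif yhat b))"

definition dE0 :: "(real \<Rightarrow> real) \<Rightarrow> (pt \<Rightarrow> real) \<Rightarrow> (pt \<Rightarrow> real) \<Rightarrow> real" where
  "dE0 \<psi> yhat v = (\<Sum>\<^sub>\<infinity> b\<in>Bonds. deriv \<psi> (Dif yhat b) * Dif v b)"

definition contD_on :: "(pt \<Rightarrow> real) set \<Rightarrow> ((pt \<Rightarrow> real) \<Rightarrow> real) \<Rightarrow> bool" where
  "contD_on S F \<longleftrightarrow> (\<forall>u\<in>S. \<forall>e>0. \<exists>d>0. \<forall>w\<in>S. normD (w - u) < d \<longrightarrow> \<bar>F w - F u\<bar> < e)"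

end

theory Submission
  imports Defs
begin


definition P :: "int \<times> int \<Rightarrow> pt" where
  "P p = (1/2, sqrt 3 / 6) + of_int (fst p) *\<^sub>R a1 + of_int (snd p) *\<^sub>R a2"

lemma P_fst: "fst (P p) = 1/2 + of_int (fst p) + of_int (snd p) / 2"
  by (simp add: P_def a1_def a2_def R6_def cos_60 sin_60)

lemma P_snd: "snd (P p) = sqrt 3 / 6 + of_int (snd p) * sqrt 3 / 2"
  by (simp add: P_def a1_def a2_def R6_def cos_60 sin_60)

lemma Lam_eq: "Lam = range P"
proof
  show "Lam \<subseteq> range P"
  proof
    fix x assume "x \<in> Lam"
    then obtain m n :: int where "x = (1/2, sqrt 3 / 6) + of_int m *\<^sub>R a1 + of_int n *\<^sub>R a2"
      unfolding Lam_def by auto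
    then have "x = P (m,n)" by (simp add: P_def)
    then show "x \<in> range P" by simp
  qed
next
  show "range P \<subseteq> Lam" unfolding Lam_def P_def by auto
qed

lemma P_inj: "inj P"
proof (rule injI)
  fix p q assume "P p = P q"
  then have 1: "fst (P p) = fst (P q)" and 2: "snd (P p) = snd (P q)" by auto
  from 2 have "of_int (snd p) = (of_int (snd q)::real)" by (simp add: P_snd)
  then have s: "snd p = snd q" by simp
  with 1 have "fst p = fst q" by (simp add: P_fst)
  with s show "p = q" by (simp add: prod_eq_iff)
qed

lemma dist_P_sq: "(dist (P p) (P q))^2 = of_int ((fst q - fst p)^2 + (fst q - fst p)*(snd q - snd p) + (snd q - snd p)^2)"
proof -
  have "(dist (P p) (P q))^2 = (fst (P p) - fst (P q))^2 + (snd (P p) - snd (P q))^2"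
  proof -
    have "dist (P p) (P q) = dist (fst (P p), snd (P p)) (fst (P q), snd (P q))" by simp
    also have "\<dots> = sqrt ((fst (P p) - fst (P q))^2 + (snd (P p) - snd (P q))^2)"
      unfolding dist_Pair_Pair dist_real_def by simp
    finally show ?thesis by simp
  qed
  also have "\<dots> = of_int ((fst q - fst p)^2 + (fst q - fst p)*(snd q - snd p) + (snd q - snd p)^2)"
    by (simp add: P_fst P_snd power2_eq_square algebra_simps)
  finally show ?thesis .
qed

definition D6 :: "(int \<times> int) set" where
  "D6 = {(1,0),(-1,0),(0,1),(0,-1),(-1,1),(1,-1)}"

lemma int_unit_form:
  fixes m n :: int assumes "m^2 + m*n + n^2 = 1" shows "(m,n) \<in> D6"
proof -
  have e: "(2*m+n)^2 + 3*n^2 = 4" using assms by (simp add: power2_eq_square algebra_simps)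
  have "3*n^2 \<le> 4" using e by (smt (verit) zero_le_power2)
  then have "n^2 \<le> 1" by simp
  have "\<not> n \<ge> 2"
  proof
    assume "n \<ge> 2" then have "n*n \<ge> 2*2" by (intro mult_mono) auto
    with \<open>n^2 \<le> 1\<close> show False by (simp add: power2_eq_square)
  qed
  moreover have "\<not> n \<le> -2"
  proof
    assume "n \<le> -2" then have "(-n)*(-n) \<ge> 2*2" by (intro mult_mono) auto
    with \<open>n^2 \<le> 1\<close> show False by (simp add: power2_eq_square)
  qed
  ultimately have "n = 0 \<or> n = 1 \<or> n = -1" by auto
  then show ?thesis
  proof (elim disjE)
    assume n: "n = 0"
    then have "m^2 = 1" using assms by simp
    then have "m = 1 \<or> m = -1" by (metis power2_eq_1_iff)
    then show ?thesis using n by (auto simp: D6_def)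
  next
    assume n: "n = 1"
    then have "m*(m+1) = 0" using assms by (simp add: power2_eq_square algebra_simps)
    then have "m = 0 \<or> m = -1" by auto
    then show ?thesis using n by (auto simp: D6_def)
  next
    assume n: "n = -1"
    then have "m*(m-1) = 0" using assms by (simp add: power2_eq_square algebra_simps)
    then have "m = 0 \<or> m = 1" by auto
    then show ?thesis using n by (auto simp: D6_def)
  qed
qed

lemma bond_form:
  assumes "b \<in> Bonds" shows "\<exists>p d. d \<in> D6 \<and> b = (P p, P (p + d))"
proof -
  obtain x y where b: "b = (x,y)" "x \<in> Lam" "y \<in> Lam" "dist x y = 1"
    using assms unfolding Bonds_def by auto
  obtain p where p: "x = P p" using b(2) unfolding Lam_eq by (auto simp: image_iff)
  obtain q where q: "y = P q" using b(3) unfolding Lam_eq by (auto simp: image_iff)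
  note pq = p q
  have "of_int ((fst q - fst p)^2 + (fst q - fst p)*(snd q - snd p) + (snd q - snd p)^2) = (1::real)"
    using dist_P_sq[of p q] b(4) pq by simp
  then have "(fst q - fst p)^2 + (fst q - fst p)*(snd q - snd p) + (snd q - snd p)^2 = 1"
    by linarith
  then have "(fst q - fst p, snd q - snd p) \<in> D6" by (rule int_unit_form)
  moreover have "q = p + (fst q - fst p, snd q - snd p)" by (simp add: prod_eq_iff)
  ultimately show ?thesis using b pq by metis
qed




lemma abs_fst_le: "\<bar>fst x\<bar> \<le> norm (x::pt)"
  using norm_fst_le[of "fst x" "snd x"] by simp
lemma abs_snd_le: "\<bar>snd x\<bar> \<le> norm (x::pt)"
  using norm_snd_le[of "snd x" "fst x"] by simp

lemma Lam_cball_finite: "finite (Lam \<inter> cball 0 R)"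
proof -
  define N where "N = \<lceil>3*R+3\<rceil>"
  have "Lam \<inter> cball 0 R \<subseteq> P ` ({-N..N} \<times> {-N..N})"
  proof
    fix x assume x: "x \<in> Lam \<inter> cball 0 R"
    then obtain p where p: "x = P p" unfolding Lam_eq by (auto simp: image_iff)
    have nx: "norm x \<le> R" using x by auto
    have s: "\<bar>sqrt 3 / 6 + of_int (snd p) * sqrt 3 / 2\<bar> \<le> R"
      using abs_snd_le[of x] nx p P_snd by simp
    have f: "\<bar>1/2 + of_int (fst p) + of_int (snd p) / 2\<bar> \<le> R"
      using abs_fst_le[of x] nx p P_fst by simp
    have s3: "sqrt 3 \<ge> 1" by simp
    have "sqrt 3 \<le> sqrt 4" by (rule real_sqrt_le_mono) simp
    then have s4: "sqrt 3 \<le> 2" by simp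
    have "\<bar>of_int (snd p) * sqrt 3 / 2\<bar> \<le> R + 1" using s s4 s3
      by (simp only: abs_le_iff) linarith
    then have n1: "\<bar>of_int (snd p)\<bar> * sqrt 3 \<le> 2*R + 2" by (simp add: abs_mult)
    have "\<bar>of_int (snd p)::real\<bar> * 1 \<le> \<bar>of_int (snd p)\<bar> * sqrt 3" using s3 by (intro mult_left_mono) auto
    then have n2: "\<bar>of_int (snd p)::real\<bar> \<le> 2*R+2" using n1 by linarith
    then have "\<bar>of_int (fst p)::real\<bar> \<le> 3*R+3" using f by linarith
    moreover have "3*R+3 \<le> of_int N" unfolding N_def by simp
    ultimately have "\<bar>of_int (fst p)::real\<bar> \<le> of_int N" "\<bar>of_int (snd p)::real\<bar> \<le> of_int N"
      using n2 abs_ge_zero[of "of_int (snd p)::real"] by linarith+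
    then have "\<bar>fst p\<bar> \<le> N" "\<bar>snd p\<bar> \<le> N" by (metis of_int_abs of_int_le_iff)+
    then have "p \<in> {-N..N} \<times> {-N..N}" by (cases p) auto
    then show "x \<in> P ` ({-N..N} \<times> {-N..N})" using p by auto
  qed
  then show ?thesis by (rule finite_subset) auto
qed

lemma bounded_Lam_finite: "bounded S \<Longrightarrow> S \<subseteq> Lam \<Longrightarrow> finite S"
proof -
  assume "bounded S" "S \<subseteq> Lam"
  then obtain R where "S \<subseteq> cball 0 R" unfolding bounded_iff by (auto simp: subset_iff)
  then have "S \<subseteq> Lam \<inter> cball 0 R" using \<open>S \<subseteq> Lam\<close> by auto
  then show ?thesis using Lam_cball_finite finite_subset by blast
qed

lemma bounded_Bonds_finite:
  assumes "bounded B" "B \<subseteq> Bonds" shows "finite B"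
proof -
  have b1: "bounded (fst ` B)" "bounded (snd ` B)"
    using assms(1) bounded_linear_image[OF _ bounded_linear_fst] bounded_linear_image[OF _ bounded_linear_snd] by auto
  have "fst ` B \<subseteq> Lam" "snd ` B \<subseteq> Lam" using assms(2) unfolding Bonds_def by auto
  then have "finite (fst ` B)" "finite (snd ` B)" using b1 bounded_Lam_finite by auto
  moreover have "B \<subseteq> fst ` B \<times> snd ` B" by (rule subset_fst_snd)
  ultimately show ?thesis by (meson finite_SigmaI finite_subset)
qed

lemma I1:
  fixes f :: "'a \<Rightarrow> real"
  assumes "f summable_on A" "\<And>x. x \<in> A \<Longrightarrow> f x \<ge> 0" "finite F" "F \<subseteq> A"
  shows "sum f F \<le> infsum f A"
proof -
  have "infsum f F \<le> infsum f A"
    using assms by (intro infsum_mono2) auto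
  then show ?thesis using assms(3) by simp
qed

lemma I2:
  fixes f :: "'a \<Rightarrow> real"
  assumes "\<And>x. x \<in> A \<Longrightarrow> f x \<ge> 0" "\<And>F. finite F \<Longrightarrow> F \<subseteq> A \<Longrightarrow> sum f F \<le> c"
  shows "f summable_on A" "infsum f A \<le> c"
proof -
  show s: "f summable_on A"
    using assms by (intro nonneg_bdd_above_summable_on) (auto simp: bdd_above_def)
  show "infsum f A \<le> c" using s assms(2) by (rule infsum_le_finite_sums)
qed

lemma I3:
  fixes f :: "'a \<Rightarrow> real"
  assumes "finite F" "\<And>x. x \<in> A \<Longrightarrow> x \<notin> F \<Longrightarrow> f x = 0"
  shows "infsum f A = sum f (A \<inter> F)" "f summable_on A"
proof -
  have "infsum f A = infsum f (A \<inter> F)"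
    using assms by (intro infsum_cong_neutral) auto
  then show "infsum f A = sum f (A \<inter> F)" using assms(1) by simp
  have "f summable_on (A \<inter> F)" using assms(1) by simp
  then show "f summable_on A"
    using assms summable_on_cong_neutral[of "A \<inter> F" A f f] by auto
qed

lemma I4:
  fixes f :: "'a \<Rightarrow> real"
  assumes "f summable_on A" "\<And>x. x \<in> A \<Longrightarrow> f x \<ge> 0" "\<tau> > 0"
  shows "\<exists>F. finite F \<and> F \<subseteq> A \<and> (\<forall>G. finite G \<longrightarrow> G \<subseteq> A - F \<longrightarrow> sum f G < \<tau>)"
proof -
  obtain F where F: "finite F" "F \<subseteq> A" "dist (sum f F) (infsum f A) \<le> \<tau>/2"
    using infsum_finite_approximation[OF assms(1), of "\<tau>/2"] assms(3) by auto
  have "\<forall>G. finite G \<longrightarrow> G \<subseteq> A - F \<longrightarrow> sum f G < \<tau>"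
  proof (intro allI impI)
    fix G assume G: "finite G" "G \<subseteq> A - F"
    have "sum f (F \<union> G) = sum f F + sum f G"
      using G F by (intro sum.union_disjoint) auto
    moreover have "sum f (F \<union> G) \<le> infsum f A"
      using F G assms by (intro I1) auto
    moreover have "infsum f A - sum f F \<le> \<tau>/2" using F(3) unfolding dist_real_def by linarith
    ultimately show "sum f G < \<tau>" using assms(3) by linarith
  qed
  then show ?thesis using F by blast
qed

lemma sq_diff_le: "((a::real) - b)\<^sup>2 \<le> 2*a\<^sup>2 + 2*b\<^sup>2"
  using zero_le_square[of "a+b"] by (simp add: power2_eq_square algebra_simps)
lemma sq_add_le: "((a::real) + b)\<^sup>2 \<le> 2*a\<^sup>2 + 2*b\<^sup>2"
  using zero_le_square[of "a-b"] by (simp add: power2_eq_square algebra_simps)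

lemma Dif_diff[simp]: "Dif (f - g) b = Dif f b - Dif g b"
  by (simp add: Dif_def)
lemma Dif_zero[simp]: "Dif (\<lambda>_. 0) b = 0"
  by (simp add: Dif_def)

definition supp :: "(pt \<Rightarrow> real) \<Rightarrow> (pt \<times> pt) set" where
  "supp v = {b \<in> Bonds. Dif v b \<noteq> 0}"

lemma W0_supp_finite: "v \<in> W0 \<Longrightarrow> finite (supp v)"
  unfolding W0_def supp_def by (auto intro: bounded_Bonds_finite)

lemma W0_infsum:
  fixes g :: "pt \<times> pt \<Rightarrow> real"
  assumes "v \<in> W0" "finite F" "supp v \<subseteq> F" "\<And>b. b \<in> Bonds \<Longrightarrow> Dif v b = 0 \<Longrightarrow> g b = 0"
  shows "infsum g Bonds = sum g (Bonds \<inter> F)" "g summable_on Bonds"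
proof -
  have h: "\<And>x. x \<in> Bonds \<Longrightarrow> x \<notin> F \<Longrightarrow> g x = 0"
    using assms(3,4) unfolding supp_def by blast
  show "infsum g Bonds = sum g (Bonds \<inter> F)" by (rule I3(1)[OF assms(2) h])
  show "g summable_on Bonds" by (rule I3(2)[OF assms(2) h])
qed

lemma W0_diff: "u \<in> W0 \<Longrightarrow> v \<in> W0 \<Longrightarrow> u - v \<in> W0"
proof -
  assume u: "u \<in> W0" and v: "v \<in> W0"
  have "{b \<in> Bonds. Dif (u - v) b \<noteq> 0} \<subseteq> {b \<in> Bonds. Dif u b \<noteq> 0} \<union> {b \<in> Bonds. Dif v b \<noteq> 0}"
    by auto
  moreover have "bounded ({b \<in> Bonds. Dif u b \<noteq> 0} \<union> {b \<in> Bonds. Dif v b \<noteq> 0})"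
    using u v unfolding W0_def by auto
  ultimately have "bounded {b \<in> Bonds. Dif (u - v) b \<noteq> 0}" by (rule bounded_subset[rotated])
  then show ?thesis using u v unfolding W0_def by (simp del: Dif_diff)
qed

lemma W0_zero: "(\<lambda>_. 0) \<in> W0" unfolding W0_def by simp

lemma W0_W12: "v \<in> W0 \<Longrightarrow> v \<in> W12"
proof -
  assume v: "v \<in> W0"
  have "(\<lambda>b. (Dif v b)\<^sup>2) summable_on Bonds"
    by (rule W0_infsum(2)[OF v W0_supp_finite[OF v] order_refl]) simp
  then show ?thesis using v unfolding W0_def W12_def by auto
qed

definition SQ :: "(pt \<Rightarrow> real) \<Rightarrow> bool" where
  "SQ v \<longleftrightarrow> (\<lambda>b. (Dif v b)\<^sup>2) summable_on Bonds"

lemma W12_SQ: "v \<in> W12 \<Longrightarrow> SQ v" unfolding W12_def SQ_def by auto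

lemma SQ_diff:
  assumes "SQ u" "SQ v" shows "SQ (u - v)"
proof -
  have s: "(\<lambda>b. 2*(Dif u b)\<^sup>2 + 2*(Dif v b)\<^sup>2) summable_on Bonds"
    using assms unfolding SQ_def by (intro summable_on_add summable_on_cmult_right) auto
  have "\<forall>F. finite F \<longrightarrow> F \<subseteq> Bonds \<longrightarrow> sum (\<lambda>b. (Dif (u - v) b)\<^sup>2) F \<le> infsum (\<lambda>b. 2*(Dif u b)\<^sup>2 + 2*(Dif v b)\<^sup>2) Bonds"
  proof (intro allI impI)
    fix F assume F: "finite F" "F \<subseteq> Bonds"
    have "sum (\<lambda>b. (Dif (u - v) b)\<^sup>2) F \<le> sum (\<lambda>b. 2*(Dif u b)\<^sup>2 + 2*(Dif v b)\<^sup>2) F"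
      by (intro sum_mono) (simp add: sq_diff_le)
    also have "\<dots> \<le> infsum (\<lambda>b. 2*(Dif u b)\<^sup>2 + 2*(Dif v b)\<^sup>2) Bonds"
      using F s by (intro I1) auto
    finally show "sum (\<lambda>b. (Dif (u - v) b)\<^sup>2) F \<le> infsum (\<lambda>b. 2*(Dif u b)\<^sup>2 + 2*(Dif v b)\<^sup>2) Bonds" .
  qed
  then show ?thesis unfolding SQ_def by (intro I2(1)) auto
qed

lemma W12_diff: "u \<in> W12 \<Longrightarrow> v \<in> W12 \<Longrightarrow> u - v \<in> W12"
  using SQ_diff[of u v] unfolding W12_def SQ_def by auto

lemma normD_nonneg: "normD v \<ge> 0" unfolding normD_def
  by (intro real_sqrt_ge_zero infsum_nonneg) auto

lemma normD_sym: "normD (u - v) = normD (v - u)"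
  unfolding normD_def by (simp add: power2_commute)

lemma normD_sq: "(normD v)\<^sup>2 = infsum (\<lambda>b. (Dif v b)\<^sup>2) Bonds"
  unfolding normD_def by (simp add: infsum_nonneg)

lemma normD_less:
  assumes "d > 0" "c < d\<^sup>2" "\<And>F. finite F \<Longrightarrow> F \<subseteq> Bonds \<Longrightarrow> sum (\<lambda>b. (Dif v b)\<^sup>2) F \<le> c"
  shows "normD v < d"
proof -
  have "infsum (\<lambda>b. (Dif v b)\<^sup>2) Bonds \<le> c" using assms by (intro I2(2)) auto
  then have "(normD v)\<^sup>2 < d\<^sup>2" using assms(2) unfolding normD_sq by linarith
  then show ?thesis using power_less_imp_less_base[of "normD v" 2 d] assms(1) by linarith
qed

lemma normD_sum_le:
  assumes "SQ v" "finite F" "F \<subseteq> Bonds"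
  shows "sum (\<lambda>b. (Dif v b)\<^sup>2) F \<le> (normD v)\<^sup>2"
  using assms unfolding normD_sq SQ_def by (intro I1) auto

lemma normD_quasi:
  assumes "SQ (x - y)" "SQ (y - z)"
  shows "normD (x - z) \<le> 2 * (normD (x - y) + normD (y - z))"
proof -
  let ?a = "normD (x - y)" and ?b = "normD (y - z)"
  have H: "\<forall>F. finite F \<longrightarrow> F \<subseteq> Bonds \<longrightarrow> sum (\<lambda>b. (Dif (x - z) b)\<^sup>2) F \<le> 2*?a\<^sup>2 + 2*?b\<^sup>2"
  proof (intro allI impI)
    fix F assume F: "finite F" "F \<subseteq> Bonds"
    have "sum (\<lambda>b. (Dif (x - z) b)\<^sup>2) F \<le> sum (\<lambda>b. 2*(Dif (x-y) b)\<^sup>2 + 2*(Dif (y-z) b)\<^sup>2) F"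
    proof (intro sum_mono)
      fix b have "Dif (x - z) b = Dif (x-y) b + Dif (y-z) b" by simp
      then show "(Dif (x - z) b)\<^sup>2 \<le> 2*(Dif (x-y) b)\<^sup>2 + 2*(Dif (y-z) b)\<^sup>2"
        using sq_add_le[of "Dif (x-y) b" "Dif (y-z) b"] by simp
    qed
    also have "\<dots> = 2 * sum (\<lambda>b. (Dif (x-y) b)\<^sup>2) F + 2 * sum (\<lambda>b. (Dif (y-z) b)\<^sup>2) F"
      by (simp add: sum.distrib sum_distrib_left)
    also have "\<dots> \<le> 2*?a\<^sup>2 + 2*?b\<^sup>2"
      using normD_sum_le[OF assms(1) F] normD_sum_le[OF assms(2) F] by simp
    finally show "sum (\<lambda>b. (Dif (x - z) b)\<^sup>2) F \<le> 2*?a\<^sup>2 + 2*?b\<^sup>2" .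
  qed
  have "infsum (\<lambda>b. (Dif (x - z) b)\<^sup>2) Bonds \<le> 2*?a\<^sup>2 + 2*?b\<^sup>2"
    by (rule I2(2)) (simp, use H in blast)
  also have "\<dots> \<le> (2*(?a + ?b))\<^sup>2"
  proof -
    have e: "(2*(?a + ?b))\<^sup>2 = 2*?a\<^sup>2 + 2*?b\<^sup>2 + (2*?a\<^sup>2 + 2*?b\<^sup>2 + 8*(?a*?b))"
      by (simp add: power2_eq_square algebra_simps)
    have "0 \<le> ?a*?b" using normD_nonneg[of "x-y"] normD_nonneg[of "y-z"] by simp
    then show ?thesis unfolding e using zero_le_power2[of ?a] zero_le_power2[of ?b] by linarith
  qed
  finally have "(normD (x - z))\<^sup>2 \<le> (2*(?a + ?b))\<^sup>2" unfolding normD_sq .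
  moreover have "0 \<le> 2*(?a + ?b)" using normD_nonneg[of "x-y"] normD_nonneg[of "y-z"] by simp
  ultimately show ?thesis by (rule power2_le_imp_le)
qed

lemma W12_quasi:
  assumes "x \<in> W12" "y \<in> W12" "z \<in> W12"
  shows "normD (x - z) \<le> 2 * (normD (x - y) + normD (y - z))"
  using assms by (intro normD_quasi SQ_diff W12_SQ)




lemma psi_int:
  fixes \<psi> :: "real \<Rightarrow> real"
  assumes p1: "\<forall>x. \<psi> (x + 1) = \<psi> x"
  shows "\<psi> (x + of_int k) = \<psi> x"
proof -
  have n: "\<psi> (y + of_nat n) = \<psi> y" for y n
  proof (induction n)
    case 0 then show ?case by simp
  next
    case (Suc n)
    have "\<psi> (y + of_nat (Suc n)) = \<psi> ((y + of_nat n) + 1)" by (simp add: algebra_simps)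
    also have "\<dots> = \<psi> (y + of_nat n)" using p1 by simp
    finally show ?case using Suc by simp
  qed
  show ?thesis
  proof (cases "k \<ge> 0")
    case True
    then have "of_int k = (of_nat (nat k)::real)" by simp
    then have "\<psi> (x + of_int k) = \<psi> (x + of_nat (nat k))" by (simp only:)
    then show ?thesis using n[of x "nat k"] by (simp only:)
  next
    case False
    then have k: "of_int k = - (of_nat (nat (-k))::real)" by simp
    have "x = x + of_int k + of_nat (nat (-k))" using k by (simp only:)
    then have "\<psi> x = \<psi> (x + of_int k + of_nat (nat (-k)))" by (simp only:)
    also have "\<dots> = \<psi> (x + of_int k)" by (rule n)
    finally show ?thesis by (rule sym)
  qed
qed

lemma deriv_int:
  fixes \<psi> :: "real \<Rightarrow> real"
  assumes p1: "\<forall>x. \<psi> (x + 1) = \<psi> x"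
  shows "deriv \<psi> (x + of_int k) = deriv \<psi> x"
proof -
  have "\<psi> = (\<lambda>y. \<psi> (y + of_int k))" using psi_int[OF p1] by auto
  then have "deriv \<psi> x = deriv (\<lambda>y. \<psi> (y + of_int k)) x" by simp
  also have "\<dots> = deriv \<psi> (x + of_int k)"
    unfolding deriv_def using DERIV_shift[of \<psi> _ x "of_int k"] by simp
  finally show ?thesis by simp
qed

lemma half_int_reduce:
  assumes "infdist a half_ints \<ge> \<epsilon>"
  shows "\<exists>k::int. a - of_int k \<in> {-1/2+\<epsilon>..1/2-\<epsilon>}"
proof -
  define k where "k = \<lfloor>a + 1/2\<rfloor>"
  have k1: "of_int k \<le> a + 1/2" "a + 1/2 < of_int k + 1" unfolding k_def by linarith+
  have h1: "of_int (k - 1) + 1/2 \<in> half_ints" unfolding half_ints_def by blast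
  have h2: "of_int k + 1/2 \<in> half_ints" unfolding half_ints_def by blast
  have "\<epsilon> \<le> dist a (of_int (k - 1) + 1/2)" using assms infdist_le[OF h1, of a] by linarith
  then have d1: "\<epsilon> \<le> a - of_int k + 1/2" using k1 by (simp add: dist_real_def)
  have "\<epsilon> \<le> dist a (of_int k + 1/2)" using assms infdist_le[OF h2, of a] by linarith
  then have d2: "\<epsilon> \<le> of_int k + 1/2 - a" using k1 by (simp add: dist_real_def)
  show ?thesis using d1 d2 by (intro exI[of _ k]) auto
qed

lemma LIP:
  fixes f f' :: "real \<Rightarrow> real"
  assumes "\<And>x. x \<in> {lo..hi} \<Longrightarrow> DERIV f x :> f' x" "\<And>x. x \<in> {lo..hi} \<Longrightarrow> \<bar>f' x\<bar> \<le> B"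
      and "x \<in> {lo..hi}" "y \<in> {lo..hi}"
  shows "\<bar>f y - f x\<bar> \<le> B * \<bar>y - x\<bar>"
proof -
  have main: "\<bar>f v - f u\<bar> \<le> B * \<bar>v - u\<bar>" if uv: "u < v" "u \<in> {lo..hi}" "v \<in> {lo..hi}" for u v
  proof -
    obtain z where z: "u < z" "z < v" "f v - f u = (v - u) * f' z"
      using MVT2[OF uv(1), of f f'] assms(1) uv by auto
    have "z \<in> {lo..hi}" using z uv by auto
    then have "\<bar>f' z\<bar> \<le> B" using assms(2) by auto
    then show ?thesis using z uv by (simp add: abs_mult mult.commute mult_left_mono)
  qed
  consider "x < y" | "x = y" | "y < x" by linarith
  then show ?thesis
  proof cases
    case 1 then show ?thesis using main assms by auto
  next
    case 2 then show ?thesis by simp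
  next
    case 3 then show ?thesis using main[of y x] assms by (simp add: abs_minus_commute)
  qed
qed

lemma BOND:
  fixes \<psi> :: "real \<Rightarrow> real" and \<epsilon> :: real
  assumes psi_C4: "C4_on (- half_ints) \<psi>"
      and psi1: "\<forall>x. \<psi> (x + 1) = \<psi> x"
      and eps: "\<epsilon> > 0"
  shows "\<exists>M1 M2. M1 \<ge> 0 \<and> M2 \<ge> 0 \<and> (\<forall>a. infdist a half_ints \<ge> \<epsilon> \<longrightarrow>
            \<bar>deriv \<psi> a\<bar> \<le> M1 \<and>
            (\<forall>t1 t2. \<bar>t1\<bar> \<le> \<epsilon>/2 \<longrightarrow> \<bar>t2\<bar> \<le> \<epsilon>/2 \<longrightarrow>
               \<bar>\<psi> (a + t1) - \<psi> (a + t2) - deriv \<psi> a * (t1 - t2)\<bar> \<le> M2 * (\<bar>t1\<bar> + \<bar>t2\<bar>) * \<bar>t1 - t2\<bar>))"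
proof -
  define J where "J = {-1/2 + \<epsilon>/2 .. 1/2 - \<epsilon>/2}"
  have notJ: "x \<in> - half_ints" if "x \<in> J" for x
  proof
    assume "x \<in> half_ints"
    then obtain j :: int where j: "x = of_int j + 1/2" unfolding half_ints_def by auto
    have "\<bar>x\<bar> < 1/2" using that eps unfolding J_def by auto
    show False
    proof (cases "j \<ge> 0")
      case True then have "(of_int j::real) \<ge> 0" by simp
      then show False using j \<open>\<bar>x\<bar> < 1/2\<close> by linarith
    next
      case False then have "(of_int j::real) \<le> -1" by simp
      then show False using j \<open>\<bar>x\<bar> < 1/2\<close> by linarith
    qed
  qed
  have C: "\<forall>k<4. \<forall>x\<in>- half_ints. ((deriv ^^ k) \<psi>) differentiable (at x)"
    using psi_C4 unfolding C4_on_def by blast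
  have d0: "DERIV \<psi> x :> deriv \<psi> x" if "x \<in> J" for x
  proof -
    have "((deriv ^^ 0) \<psi>) differentiable (at x)" using C[rule_format, of 0 x] notJ[OF that] by simp
    then show ?thesis by (simp add: DERIV_deriv_iff_real_differentiable)
  qed
  have d1: "DERIV (deriv \<psi>) x :> deriv (deriv \<psi>) x" if "x \<in> J" for x
  proof -
    have "((deriv ^^ 1) \<psi>) differentiable (at x)" using C[rule_format, of 1 x] notJ[OF that] by simp
    then show ?thesis by (simp add: DERIV_deriv_iff_real_differentiable)
  qed
  have d2: "(deriv (deriv \<psi>)) differentiable (at x)" if "x \<in> J" for x
  proof -
    have "((deriv ^^ 2) \<psi>) differentiable (at x)" using C[rule_format, of 2 x] notJ[OF that] by simp
    then show ?thesis by (simp add: numeral_2_eq_2)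
  qed
  have cJ: "compact J" unfolding J_def by simp
  have c1: "continuous_on J (deriv \<psi>)"
    using d1 by (meson DERIV_isCont continuous_at_imp_continuous_on)
  have c2: "continuous_on J (deriv (deriv \<psi>))"
    using d2 by (meson differentiable_imp_continuous_within continuous_at_imp_continuous_on)
  obtain M1 where M1: "M1 \<ge> 0" "\<And>x. x \<in> J \<Longrightarrow> norm (deriv \<psi> x) \<le> M1"
    using continuous_on_compact_bound[OF cJ c1] by blast
  obtain M2 where M2: "M2 \<ge> 0" "\<And>x. x \<in> J \<Longrightarrow> norm (deriv (deriv \<psi>) x) \<le> M2"
    using continuous_on_compact_bound[OF cJ c2] by blast
  have "\<forall>a. infdist a half_ints \<ge> \<epsilon> \<longrightarrow>
            \<bar>deriv \<psi> a\<bar> \<le> M1 \<and>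
            (\<forall>t1 t2. \<bar>t1\<bar> \<le> \<epsilon>/2 \<longrightarrow> \<bar>t2\<bar> \<le> \<epsilon>/2 \<longrightarrow>
               \<bar>\<psi> (a + t1) - \<psi> (a + t2) - deriv \<psi> a * (t1 - t2)\<bar> \<le> M2 * (\<bar>t1\<bar> + \<bar>t2\<bar>) * \<bar>t1 - t2\<bar>)"
  proof (intro allI impI conjI)
    fix a assume a: "infdist a half_ints \<ge> \<epsilon>"
    obtain k :: int where k: "a - of_int k \<in> {-1/2+\<epsilon>..1/2-\<epsilon>}" using half_int_reduce[OF a] by blast
    define a' where "a' = a - of_int k"
    have aa: "a = a' + of_int k" unfolding a'_def by simp
    have a'J: "a' \<in> J" using k eps unfolding a'_def J_def by auto
    have da: "deriv \<psi> a = deriv \<psi> a'" unfolding aa by (rule deriv_int[OF psi1])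
    show "\<bar>deriv \<psi> a\<bar> \<le> M1" using M1(2)[OF a'J] da by simp
    fix t1 t2 :: real assume t: "\<bar>t1\<bar> \<le> \<epsilon>/2" "\<bar>t2\<bar> \<le> \<epsilon>/2"
    define m where "m = max \<bar>t1\<bar> \<bar>t2\<bar>"
    have mle: "m \<le> \<epsilon>/2" "m \<ge> 0" "m \<le> \<bar>t1\<bar> + \<bar>t2\<bar>" unfolding m_def using t by auto
    define I where "I = {a' - m .. a' + m}"
    have IJ: "I \<subseteq> J" using k mle unfolding I_def J_def a'_def by auto
    have dphi: "DERIV (\<lambda>x. \<psi> x - deriv \<psi> a' * x) x :> deriv \<psi> x - deriv \<psi> a'" if "x \<in> I" for x
      using d0[of x] IJ that by (auto intro!: derivative_eq_intros)
    have bphi: "\<bar>deriv \<psi> x - deriv \<psi> a'\<bar> \<le> M2 * m" if "x \<in> I" for x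
    proof -
      have "\<bar>deriv \<psi> x - deriv \<psi> a'\<bar> \<le> M2 * \<bar>x - a'\<bar>"
        apply (rule LIP[where lo="-1/2 + \<epsilon>/2" and hi="1/2 - \<epsilon>/2"])
        using d1 M2 IJ that a'J unfolding J_def by auto
      also have "\<dots> \<le> M2 * m" using that unfolding I_def by (intro mult_left_mono M2) auto
      finally show ?thesis .
    qed
    have i1: "a' + t1 \<in> I" "a' + t2 \<in> I" unfolding I_def m_def by auto
    have "\<bar>(\<psi> (a' + t1) - deriv \<psi> a' * (a' + t1)) - (\<psi> (a' + t2) - deriv \<psi> a' * (a' + t2))\<bar> \<le> (M2 * m) * \<bar>(a' + t1) - (a' + t2)\<bar>"
      apply (rule LIP[where lo="a' - m" and hi="a' + m"])
      using dphi bphi i1 unfolding I_def by auto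
    also have "\<dots> \<le> M2 * (\<bar>t1\<bar> + \<bar>t2\<bar>) * \<bar>t1 - t2\<bar>"
      using mle M2(1) by (simp add: mult_left_mono mult_right_mono)
    finally have "\<bar>\<psi> (a' + t1) - \<psi> (a' + t2) - deriv \<psi> a' * (t1 - t2)\<bar> \<le> M2 * (\<bar>t1\<bar> + \<bar>t2\<bar>) * \<bar>t1 - t2\<bar>"
      by (simp add: algebra_simps)
    moreover have "\<psi> (a + t1) = \<psi> (a' + t1)" "\<psi> (a + t2) = \<psi> (a' + t2)"
      unfolding aa using psi_int[OF psi1] by (metis add.commute add.left_commute)+
    ultimately show "\<bar>\<psi> (a + t1) - \<psi> (a + t2) - deriv \<psi> a * (t1 - t2)\<bar> \<le> M2 * (\<bar>t1\<bar> + \<bar>t2\<bar>) * \<bar>t1 - t2\<bar>"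
      using da by simp
  qed
  then show ?thesis using M1(1) M2(1) by blast
qed

lemma psi_unif:
  fixes \<psi> :: "real \<Rightarrow> real"
  assumes psi_cont: "continuous_on UNIV \<psi>" and psi1: "\<forall>x. \<psi> (x + 1) = \<psi> x" and e: "\<eta> > 0"
  shows "\<exists>\<rho>>0. \<forall>x y. \<bar>x - y\<bar> < \<rho> \<longrightarrow> \<bar>\<psi> x - \<psi> y\<bar> < \<eta>"
proof -
  have "uniformly_continuous_on {-2..2} \<psi>"
    by (rule compact_uniformly_continuous) (auto intro: continuous_on_subset[OF psi_cont])
  then obtain \<rho>' where r: "\<rho>' > 0" "\<forall>x\<in>{-2..2}. \<forall>x'\<in>{-2..2}. dist x' x < \<rho>' \<longrightarrow> dist (\<psi> x') (\<psi> x) < \<eta>"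
    unfolding uniformly_continuous_on_def using e by blast
  have "\<forall>x y. \<bar>x - y\<bar> < min \<rho>' 1 \<longrightarrow> \<bar>\<psi> x - \<psi> y\<bar> < \<eta>"
  proof (intro allI impI)
    fix x y :: real assume xy: "\<bar>x - y\<bar> < min \<rho>' 1"
    define k where "k = \<lfloor>x\<rfloor>"
    have kx: "of_int k \<le> x" "x < of_int k + 1" unfolding k_def by linarith+
    have e1: "\<psi> x = \<psi> (x - of_int k)" using psi_int[OF psi1, of "x - of_int k" k] by simp
    have e2: "\<psi> y = \<psi> (y - of_int k)" using psi_int[OF psi1, of "y - of_int k" k] by simp
    have "x - of_int k \<in> {-2..2}" "y - of_int k \<in> {-2..2}" "dist (x - of_int k) (y - of_int k) < \<rho>'"
      using kx xy by (auto simp: dist_real_def)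
    then have "dist (\<psi> (x - of_int k)) (\<psi> (y - of_int k)) < \<eta>"
      using r(2) by blast
    then show "\<bar>\<psi> x - \<psi> y\<bar> < \<eta>" using e1 e2 by (simp add: dist_real_def)
  qed
  then show ?thesis using r(1) by (intro exI[of _ "min \<rho>' 1"]) auto
qed




lemma E_fin:
  assumes "v \<in> W0" "finite F" "supp v \<subseteq> F" "F \<subseteq> Bonds"
  shows "energy \<psi> y v = (\<Sum>b\<in>F. \<psi> (Dif y b + Dif v b) - \<psi> (Dif y b))"
proof -
  have "energy \<psi> y v = (\<Sum>b\<in>Bonds \<inter> F. \<psi> (Dif y b + Dif v b) - \<psi> (Dif y b))"
    unfolding energy_def by (rule W0_infsum(1)[OF assms(1-3)]) simp
  also have "Bonds \<inter> F = F" using assms(4) by auto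
  finally show ?thesis .
qed

lemma dE_fin:
  assumes "v \<in> W0" "finite F" "supp v \<subseteq> F" "F \<subseteq> Bonds"
  shows "dE0 \<psi> y v = (\<Sum>b\<in>F. deriv \<psi> (Dif y b) * Dif v b)"
proof -
  have "dE0 \<psi> y v = (\<Sum>b\<in>Bonds \<inter> F. deriv \<psi> (Dif y b) * Dif v b)"
    unfolding dE0_def by (rule W0_infsum(1)[OF assms(1-3)]) simp
  also have "Bonds \<inter> F = F" using assms(4) by auto
  finally show ?thesis .
qed

lemma supp_diff: "supp (u - v) \<subseteq> supp u \<union> supp v"
  unfolding supp_def by auto

lemma card_big:
  fixes t :: "'a \<Rightarrow> real"
  assumes "finite F" "\<delta> > 0" "(\<Sum>b\<in>F. (t b)\<^sup>2) \<le> A2"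
  shows "real (card {b\<in>F. \<bar>t b\<bar> > \<delta>}) * \<delta>\<^sup>2 \<le> A2"
proof -
  let ?G = "{b\<in>F. \<bar>t b\<bar> > \<delta>}"
  have "real (card ?G) * \<delta>\<^sup>2 = (\<Sum>b\<in>?G. \<delta>\<^sup>2)" by simp
  also have "\<dots> \<le> (\<Sum>b\<in>?G. (t b)\<^sup>2)"
  proof (rule sum_mono)
    fix b assume "b \<in> ?G"
    then have "\<delta> < \<bar>t b\<bar>" by auto
    then have "\<delta>\<^sup>2 \<le> \<bar>t b\<bar>\<^sup>2" using assms(2) by (intro power_mono) auto
    then show "\<delta>\<^sup>2 \<le> (t b)\<^sup>2" by simp
  qed
  also have "\<dots> \<le> (\<Sum>b\<in>F. (t b)\<^sup>2)" using assms(1) by (intro sum_mono2) auto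
  finally show ?thesis using assms(3) by linarith
qed

lemma amgm:
  fixes t h l :: real assumes "l > 0"
  shows "\<bar>t\<bar> * \<bar>h\<bar> \<le> (l * t\<^sup>2 + h\<^sup>2 / l) / 2"
proof -
  have "0 \<le> (l * \<bar>t\<bar> - \<bar>h\<bar>)\<^sup>2 / l" using assms by simp
  also have "(l * \<bar>t\<bar> - \<bar>h\<bar>)\<^sup>2 / l = l * t\<^sup>2 + h\<^sup>2 / l - 2 * (\<bar>t\<bar> * \<bar>h\<bar>)"
    using assms by (simp add: power2_eq_square field_simps)
  finally have "0 \<le> l * t\<^sup>2 + h\<^sup>2 / l - 2 * (\<bar>t\<bar> * \<bar>h\<bar>)" .
  moreover have "\<And>X P::real. 0 \<le> X - 2 * P \<Longrightarrow> P \<le> X / 2" by linarith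
  ultimately show ?thesis by blast
qed

lemma abs_sq_le: "(x::real)\<^sup>2 \<le> c\<^sup>2 \<Longrightarrow> c \<ge> 0 \<Longrightarrow> \<bar>x\<bar> \<le> c"
  using abs_le_square_iff[of x c] by simp




lemma KEY:
  fixes \<psi> :: "real \<Rightarrow> real" and \<epsilon> :: real and yhat :: "pt \<Rightarrow> real"
  assumes psi_cont: "continuous_on UNIV \<psi>"
      and psi_C4: "C4_on (- half_ints) \<psi>"
      and psi1: "\<forall>x. \<psi> (x + 1) = \<psi> x"
      and eps: "\<epsilon> > 0" "\<forall>b\<in>Bonds. infdist (Dif yhat b) half_ints \<ge> \<epsilon>"
      and bdd: "\<exists>C. \<forall>v\<in>W0. dE0 \<psi> yhat v \<le> C * normD v"
      and A: "A > 0" and e: "e > 0"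
  shows "\<exists>d>0. \<forall>w1\<in>W0. \<forall>w2\<in>W0. normD w1 \<le> A \<longrightarrow> normD w2 \<le> A \<longrightarrow> normD (w1 - w2) < d \<longrightarrow>
           \<bar>energy \<psi> yhat w1 - energy \<psi> yhat w2\<bar> < e"
proof -
  obtain C where hC: "\<forall>v\<in>W0. dE0 \<psi> yhat v \<le> C * normD v" using bdd by blast
  obtain M1 M2 where M: "M1 \<ge> 0" "M2 \<ge> 0" and MB: "\<forall>a. infdist a half_ints \<ge> \<epsilon> \<longrightarrow>
            \<bar>deriv \<psi> a\<bar> \<le> M1 \<and>
            (\<forall>t1 t2. \<bar>t1\<bar> \<le> \<epsilon>/2 \<longrightarrow> \<bar>t2\<bar> \<le> \<epsilon>/2 \<longrightarrow>
               \<bar>\<psi> (a + t1) - \<psi> (a + t2) - deriv \<psi> a * (t1 - t2)\<bar> \<le> M2 * (\<bar>t1\<bar> + \<bar>t2\<bar>) * \<bar>t1 - t2\<bar>)"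
    using BOND[OF psi_C4 psi1 eps(1)] by blast
  define \<delta> where "\<delta> = \<epsilon>/2"
  have \<delta>: "\<delta> > 0" unfolding \<delta>_def using eps by simp
  define N0 where "N0 = 2*A\<^sup>2/\<delta>\<^sup>2"
  have N0: "N0 \<ge> 0" unfolding N0_def by simp
  define l where "l = e/(12*(M2*A\<^sup>2+1))"
  have MA: "M2*A\<^sup>2+1 > 0" using M by (simp add: add_nonneg_pos)
  have l: "l > 0" unfolding l_def using e MA by (intro divide_pos_pos) auto
  define \<eta> where "\<eta> = e/(6*(N0+1))"
  have \<eta>: "\<eta> > 0" unfolding \<eta>_def using e N0 by simp
  obtain \<rho> where \<rho>: "\<rho> > 0" "\<forall>x y. \<bar>x - y\<bar> < \<rho> \<longrightarrow> \<bar>\<psi> x - \<psi> y\<bar> < \<eta>"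
    using psi_unif[OF psi_cont psi1 \<eta>] by blast
  define d where "d = min (min \<rho> 1) (min (e/(6*(\<bar>C\<bar>+1))) (min (l*e/(6*(M2+1))) (e/(6*(M1+1)*(N0+1)))))"
  have dpos: "d > 0" unfolding d_def using \<rho> e l M N0 by (simp add: add_pos_nonneg)
  have d1: "d \<le> \<rho>" "d \<le> 1" "d \<le> e/(6*(\<bar>C\<bar>+1))" "d \<le> l*e/(6*(M2+1))" "d \<le> e/(6*(M1+1)*(N0+1))"
    unfolding d_def by simp_all
  have q1: "\<And>x::real. x \<ge> 0 \<Longrightarrow> x/(x+1) \<le> 1" by simp
  have ar1: "\<bar>C\<bar> * d \<le> e/6"
  proof -
    have "\<bar>C\<bar> * d \<le> (\<bar>C\<bar>+1) * (e/(6*(\<bar>C\<bar>+1)))" using d1(3) dpos by (intro mult_mono) auto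
    also have "\<dots> = e/6"
    proof -
      have gen: "\<And>X::real. X > 0 \<Longrightarrow> X * (e/(6*X)) = e/6" by simp
      show ?thesis by (rule gen) (simp add: add_nonneg_pos)
    qed
    finally show ?thesis .
  qed
  have ar2: "M2 * (2*l*A\<^sup>2) \<le> e/6"
  proof -
    have gen: "\<And>X. X > 0 \<Longrightarrow> M2 * (2*(e/(12*X))*A\<^sup>2) = e/6 * (M2*A\<^sup>2/X)"
      by (simp add: field_simps)
    have "M2 * (2*l*A\<^sup>2) = e/6 * (M2*A\<^sup>2/(M2*A\<^sup>2+1))" unfolding l_def using gen[OF MA] .
    also have "\<dots> \<le> e/6 * 1" using e M q1[of "M2*A\<^sup>2"] by (intro mult_left_mono) auto
    finally show ?thesis by simp
  qed
  have ar3: "M2 * (d\<^sup>2 / l) \<le> e/6"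
  proof -
    have "d\<^sup>2 \<le> d * (l*e/(6*(M2+1)))" unfolding power2_eq_square using d1(4) dpos by (intro mult_left_mono) auto
    then have "d\<^sup>2 / l \<le> d * (l*e/(6*(M2+1))) / l" using l by (intro divide_right_mono) auto
    also have "\<dots> = d * (e/(6*(M2+1)))" using l by simp
    also have "\<dots> \<le> 1 * (e/(6*(M2+1)))" using d1(2) e M by (intro mult_right_mono) auto
    finally have "M2 * (d\<^sup>2 / l) \<le> M2 * (e/(6*(M2+1)))" using M by (intro mult_left_mono) auto
    also have "\<dots> = e/6 * (M2/(M2+1))"
    proof -
      have gen: "\<And>X. X > 0 \<Longrightarrow> M2 * (e/(6*X)) = e/6 * (M2/X)" by simp
      show ?thesis by (rule gen) (use M in \<open>simp add: add_nonneg_pos\<close>)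
    qed
    also have "\<dots> \<le> e/6 * 1" using e M q1[of M2] by (intro mult_left_mono) auto
    finally show ?thesis by simp
  qed
  have ar4: "N0 * \<eta> \<le> e/6"
  proof -
    have gen: "\<And>X. X > 0 \<Longrightarrow> N0 * (e/(6*X)) = e/6 * (N0/X)" by simp
    have "N0 * \<eta> = e/6 * (N0/(N0+1))" unfolding \<eta>_def by (rule gen) (use N0 in \<open>simp add: add_nonneg_pos\<close>)
    also have "\<dots> \<le> e/6 * 1" using e N0 q1[of N0] by (intro mult_left_mono) auto
    finally show ?thesis by simp
  qed
  have ar5: "N0 * (M1 * d) \<le> e/6"
  proof -
    have "N0 * (M1 * d) \<le> N0 * (M1 * (e/(6*(M1+1)*(N0+1))))" using d1(5) M N0 by (intro mult_left_mono) auto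
    also have "\<dots> = e/6 * (N0/(N0+1)) * (M1/(M1+1))"
    proof -
      have gen: "\<And>X Y. X > 0 \<Longrightarrow> Y > 0 \<Longrightarrow> N0 * (M1 * (e/(6*X*Y))) = e/6 * (N0/Y) * (M1/X)" by (simp add: field_simps)
      show ?thesis by (rule gen) (use M N0 in \<open>simp_all add: add_nonneg_pos\<close>)
    qed
    also have "\<dots> \<le> e/6 * 1 * 1" using e M N0 q1[of N0] q1[of M1] by (intro mult_mono) auto
    finally show ?thesis by simp
  qed
  have main: "\<bar>energy \<psi> yhat w1 - energy \<psi> yhat w2\<bar> < e"
    if w: "w1 \<in> W0" "w2 \<in> W0" and n1: "normD w1 \<le> A" and n2: "normD w2 \<le> A"
      and nh: "normD (w1 - w2) < d" for w1 w2
  proof -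
    define F where "F = supp w1 \<union> supp w2"
    have F: "finite F" "F \<subseteq> Bonds" unfolding F_def using W0_supp_finite w by (auto simp: supp_def)
    define a where "a b = Dif yhat b" for b
    define t1 where "t1 b = Dif w1 b" for b
    define t2 where "t2 b = Dif w2 b" for b
    define h where "h b = t1 b - t2 b" for b
    have E1: "energy \<psi> yhat w1 = (\<Sum>b\<in>F. \<psi> (a b + t1 b) - \<psi> (a b))"
      unfolding a_def t1_def by (rule E_fin[OF w(1) F(1) _ F(2)]) (auto simp: F_def)
    have E2: "energy \<psi> yhat w2 = (\<Sum>b\<in>F. \<psi> (a b + t2 b) - \<psi> (a b))"
      unfolding a_def t2_def by (rule E_fin[OF w(2) F(1) _ F(2)]) (auto simp: F_def)
    define L where "L = (\<Sum>b\<in>F. deriv \<psi> (a b) * h b)"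
    have w12: "w1 - w2 \<in> W0" "w2 - w1 \<in> W0" using W0_diff w by auto
    have dL1: "dE0 \<psi> yhat (w1 - w2) = L"
    proof -
      have "dE0 \<psi> yhat (w1 - w2) = (\<Sum>b\<in>F. deriv \<psi> (Dif yhat b) * Dif (w1 - w2) b)"
        by (rule dE_fin[OF w12(1) F(1) _ F(2)]) (use supp_diff[of w1 w2] in \<open>auto simp: F_def\<close>)
      then show ?thesis unfolding L_def h_def t1_def t2_def a_def by simp
    qed
    have dL2: "dE0 \<psi> yhat (w2 - w1) = - L"
    proof -
      have "dE0 \<psi> yhat (w2 - w1) = (\<Sum>b\<in>F. deriv \<psi> (Dif yhat b) * Dif (w2 - w1) b)"
        by (rule dE_fin[OF w12(2) F(1) _ F(2)]) (use supp_diff[of w2 w1] in \<open>auto simp: F_def\<close>)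
      also have "\<dots> = (\<Sum>b\<in>F. - (deriv \<psi> (a b) * h b))"
        unfolding h_def t1_def t2_def a_def by (intro sum.cong) (auto simp: algebra_simps)
      finally show ?thesis unfolding L_def by (simp add: sum_negf)
    qed
    let ?nh = "normD (w1 - w2)"
    have nhnn: "?nh \<ge> 0" by (rule normD_nonneg)
    have "L \<le> C * ?nh" using hC w12(1) dL1 by auto
    moreover have "- L \<le> C * ?nh" using hC w12(2) dL2 normD_sym[of w2 w1] by auto
    ultimately have "\<bar>L\<bar> \<le> C * ?nh" by linarith
    also have "\<dots> \<le> \<bar>C\<bar> * d" using nh nhnn by (intro mult_mono) auto
    finally have Lb: "\<bar>L\<bar> \<le> e/6" using ar1 by linarith
    have SQs: "SQ w1" "SQ w2" "SQ (w1 - w2)" using w w12 W0_W12 W12_SQ by auto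
    have St1: "(\<Sum>b\<in>F. (t1 b)\<^sup>2) \<le> A\<^sup>2"
    proof -
      have "(\<Sum>b\<in>F. (t1 b)\<^sup>2) \<le> (normD w1)\<^sup>2" unfolding t1_def by (rule normD_sum_le[OF SQs(1) F])
      also have "\<dots> \<le> A\<^sup>2" using n1 normD_nonneg[of w1] by (intro power_mono) auto
      finally show ?thesis .
    qed
    have St2: "(\<Sum>b\<in>F. (t2 b)\<^sup>2) \<le> A\<^sup>2"
    proof -
      have "(\<Sum>b\<in>F. (t2 b)\<^sup>2) \<le> (normD w2)\<^sup>2" unfolding t2_def by (rule normD_sum_le[OF SQs(2) F])
      also have "\<dots> \<le> A\<^sup>2" using n2 normD_nonneg[of w2] by (intro power_mono) auto
      finally show ?thesis .
    qed
    have Sh: "(\<Sum>b\<in>F. (h b)\<^sup>2) \<le> d\<^sup>2"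
    proof -
      have "(\<Sum>b\<in>F. (h b)\<^sup>2) \<le> ?nh\<^sup>2" unfolding h_def t1_def t2_def
        using normD_sum_le[OF SQs(3) F] by simp
      also have "\<dots> \<le> d\<^sup>2" using nh nhnn by (intro power_mono) auto
      finally show ?thesis .
    qed
    have Shn: "(\<Sum>b\<in>F. (h b)\<^sup>2) \<le> ?nh\<^sup>2" unfolding h_def t1_def t2_def
        using normD_sum_le[OF SQs(3) F] by simp
    have hbn: "\<bar>h b\<bar> \<le> ?nh" if "b \<in> F" for b
    proof -
      have "(h b)\<^sup>2 \<le> (\<Sum>b\<in>F. (h b)\<^sup>2)" using F(1) that by (intro member_le_sum) auto
      then show ?thesis using Shn nhnn by (intro abs_sq_le) auto
    qed
    have hb: "\<bar>h b\<bar> \<le> d" if "b \<in> F" for b using hbn[OF that] nh by linarith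
    define big where "big b \<longleftrightarrow> \<bar>t1 b\<bar> > \<delta> \<or> \<bar>t2 b\<bar> > \<delta>" for b
    define gd where "gd b = \<psi> (a b + t1 b) - \<psi> (a b + t2 b) - deriv \<psi> (a b) * h b" for b
    have gdb: "\<bar>gd b\<bar> \<le> M2 * ((\<bar>t1 b\<bar> + \<bar>t2 b\<bar>) * \<bar>h b\<bar>) + (if big b then \<eta> + M1 * d else 0)"
      if b: "b \<in> F" for b
    proof -
      have ab: "infdist (a b) half_ints \<ge> \<epsilon>" using eps(2) F(2) b unfolding a_def by auto
      have nn: "0 \<le> M2 * ((\<bar>t1 b\<bar> + \<bar>t2 b\<bar>) * \<bar>h b\<bar>)" using M by simp
      show ?thesis
      proof (cases "big b")
        case False
        then have "\<bar>t1 b\<bar> \<le> \<epsilon>/2" "\<bar>t2 b\<bar> \<le> \<epsilon>/2" unfolding big_def \<delta>_def by auto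
        then have "\<bar>gd b\<bar> \<le> M2 * (\<bar>t1 b\<bar> + \<bar>t2 b\<bar>) * \<bar>t1 b - t2 b\<bar>"
          using MB ab unfolding gd_def h_def by blast
        then show ?thesis using False by (simp add: h_def mult.assoc)
      next
        case True
        have "\<bar>(a b + t1 b) - (a b + t2 b)\<bar> < \<rho>" using hbn[OF b] d1(1) nh unfolding h_def by simp
        then have "\<bar>\<psi> (a b + t1 b) - \<psi> (a b + t2 b)\<bar> < \<eta>" using \<rho>(2) by blast
        moreover have "\<bar>deriv \<psi> (a b) * h b\<bar> \<le> M1 * d"
          unfolding abs_mult using MB ab hb[OF b] M by (intro mult_mono) auto
        ultimately have "\<bar>gd b\<bar> \<le> \<eta> + M1 * d" unfolding gd_def by linarith
        then show ?thesis using True nn by simp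
      qed
    qed
    have "energy \<psi> yhat w1 - energy \<psi> yhat w2 = L + (\<Sum>b\<in>F. gd b)"
      unfolding E1 E2 L_def gd_def by (simp add: sum_subtractf[symmetric] sum.distrib[symmetric] algebra_simps)
    then have "\<bar>energy \<psi> yhat w1 - energy \<psi> yhat w2\<bar> \<le> \<bar>L\<bar> + (\<Sum>b\<in>F. \<bar>gd b\<bar>)"
      by (simp add: abs_triangle_ineq order_trans[OF abs_triangle_ineq add_left_mono[OF sum_abs]])
    also have "(\<Sum>b\<in>F. \<bar>gd b\<bar>) \<le> (\<Sum>b\<in>F. M2 * ((\<bar>t1 b\<bar> + \<bar>t2 b\<bar>) * \<bar>h b\<bar>) + (if big b then \<eta> + M1 * d else 0))"
      by (intro sum_mono gdb)
    also have "\<dots> = M2 * (\<Sum>b\<in>F. (\<bar>t1 b\<bar> + \<bar>t2 b\<bar>) * \<bar>h b\<bar>) + (\<Sum>b\<in>F. (if big b then \<eta> + M1 * d else 0))"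
      by (simp add: sum.distrib sum_distrib_left)
    also have "(\<Sum>b\<in>F. (\<bar>t1 b\<bar> + \<bar>t2 b\<bar>) * \<bar>h b\<bar>) \<le> 2*l*A\<^sup>2 + d\<^sup>2/l"
    proof -
      have "(\<Sum>b\<in>F. (\<bar>t1 b\<bar> + \<bar>t2 b\<bar>) * \<bar>h b\<bar>) \<le> (\<Sum>b\<in>F. l * (t1 b)\<^sup>2 + l * (t2 b)\<^sup>2 + (h b)\<^sup>2 / l)"
      proof (rule sum_mono)
        fix b
        have "\<bar>t1 b\<bar> * \<bar>h b\<bar> \<le> (l * (t1 b)\<^sup>2 + (h b)\<^sup>2 / l) / 2" by (rule amgm[OF l])
        moreover have "\<bar>t2 b\<bar> * \<bar>h b\<bar> \<le> (l * (t2 b)\<^sup>2 + (h b)\<^sup>2 / l) / 2" by (rule amgm[OF l])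
        moreover have "0 \<le> l * (t1 b)\<^sup>2" "0 \<le> l * (t2 b)\<^sup>2" using l by auto
        ultimately show "(\<bar>t1 b\<bar> + \<bar>t2 b\<bar>) * \<bar>h b\<bar> \<le> l * (t1 b)\<^sup>2 + l * (t2 b)\<^sup>2 + (h b)\<^sup>2 / l"
          by (simp add: distrib_right)
      qed
      also have "\<dots> = l * (\<Sum>b\<in>F. (t1 b)\<^sup>2) + l * (\<Sum>b\<in>F. (t2 b)\<^sup>2) + (\<Sum>b\<in>F. (h b)\<^sup>2) / l"
        by (simp add: sum.distrib sum_distrib_left sum_divide_distrib)
      also have "\<dots> \<le> l * A\<^sup>2 + l * A\<^sup>2 + d\<^sup>2 / l"
        using St1 St2 Sh l by (intro add_mono mult_left_mono divide_right_mono) auto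
      finally show ?thesis by simp
    qed
    also have "(\<Sum>b\<in>F. (if big b then \<eta> + M1 * d else 0)) \<le> N0 * (\<eta> + M1 * d)"
    proof -
      have "(\<Sum>b\<in>F. (if big b then \<eta> + M1 * d else 0)) = real (card {b\<in>F. big b}) * (\<eta> + M1 * d)"
      proof -
        have "F \<inter> Collect big = {b\<in>F. big b}" by auto
        then show ?thesis using F(1) by (simp add: sum.If_cases)
      qed
      also have "real (card {b\<in>F. big b}) \<le> N0"
      proof -
        have "{b\<in>F. big b} = {b\<in>F. \<bar>t1 b\<bar> > \<delta>} \<union> {b\<in>F. \<bar>t2 b\<bar> > \<delta>}" unfolding big_def by auto
        then have "card {b\<in>F. big b} \<le> card {b\<in>F. \<bar>t1 b\<bar> > \<delta>} + card {b\<in>F. \<bar>t2 b\<bar> > \<delta>}"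
          by (simp add: card_Un_le)
        moreover have "real (card {b\<in>F. \<bar>t1 b\<bar> > \<delta>}) * \<delta>\<^sup>2 \<le> A\<^sup>2" by (rule card_big[OF F(1) \<delta> St1])
        moreover have "real (card {b\<in>F. \<bar>t2 b\<bar> > \<delta>}) * \<delta>\<^sup>2 \<le> A\<^sup>2" by (rule card_big[OF F(1) \<delta> St2])
        ultimately have "real (card {b\<in>F. big b}) * \<delta>\<^sup>2 \<le> 2 * A\<^sup>2"
          by (smt (verit) of_nat_add of_nat_mono distrib_right zero_le_power2 mult_right_mono)
        then show ?thesis unfolding N0_def using \<delta> by (simp add: field_simps)
      qed
      then have "real (card {b\<in>F. big b}) * (\<eta> + M1 * d) \<le> N0 * (\<eta> + M1 * d)"
        using \<eta> M dpos by (intro mult_right_mono) auto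
      finally show ?thesis .
    qed
    finally have "\<bar>energy \<psi> yhat w1 - energy \<psi> yhat w2\<bar> \<le> \<bar>L\<bar> + (M2 * (2*l*A\<^sup>2 + d\<^sup>2/l) + N0 * (\<eta> + M1 * d))"
      using M by (simp add: mult_left_mono)
    also have "\<dots> = \<bar>L\<bar> + M2 * (2*l*A\<^sup>2) + M2 * (d\<^sup>2/l) + N0 * \<eta> + N0 * (M1 * d)"
      by (simp add: algebra_simps)
    also have "\<dots> \<le> 5 * (e/6)" using Lb ar2 ar3 ar4 ar5 by linarith
    also have "\<dots> < e" using e by simp
    finally show ?thesis .
  qed
  show ?thesis using dpos main by blast
qed




definition clamp01 :: "real \<Rightarrow> real" where "clamp01 s = max 0 (min 1 s)"

lemma clamp_lip: "\<bar>clamp01 s - clamp01 t\<bar> \<le> \<bar>s - t\<bar>"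
  unfolding clamp01_def by (simp add: max_def min_def split: if_splits)

lemma clamp_range: "0 \<le> clamp01 s" "clamp01 s \<le> 1"
  unfolding clamp01_def by auto

definition fcut :: "nat \<Rightarrow> nat \<Rightarrow> nat \<Rightarrow> real" where
  "fcut K L k = clamp01 ((harm L - harm k) / (harm L - harm K))"

lemma harm_strict: "K < L \<Longrightarrow> harm K < (harm L :: real)"
proof -
  assume "K < L"
  then have "harm (Suc K) \<le> (harm L :: real)" by (intro harm_mono) auto
  moreover have "harm (Suc K) = harm K + inverse (of_nat (Suc K) :: real)" by (rule harm_Suc)
  moreover have "inverse (of_nat (Suc K) :: real) > 0" by simp
  ultimately show ?thesis by linarith
qed

lemma fcut_lip:
  assumes "K < L"
  shows "\<bar>fcut K L j - fcut K L k\<bar> \<le> \<bar>harm j - harm k\<bar> / (harm L - harm K)"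
proof -
  let ?H = "harm L - harm K :: real"
  have H: "?H > 0" using harm_strict[OF assms] by simp
  have "\<bar>fcut K L j - fcut K L k\<bar> \<le> \<bar>(harm L - harm j) / ?H - (harm L - harm k) / ?H\<bar>"
    unfolding fcut_def by (rule clamp_lip)
  also have "(harm L - harm j) / ?H - (harm L - harm k) / ?H = (harm k - harm j) / ?H"
    by (simp add: diff_divide_distrib)
  also have "\<bar>(harm k - harm j) / ?H\<bar> = \<bar>harm j - harm k\<bar> / ?H"
    using H by (simp add: abs_minus_commute)
  finally show ?thesis .
qed

lemma fcut_one: "K < L \<Longrightarrow> k \<le> K \<Longrightarrow> fcut K L k = 1"
proof -
  assume a: "K < L" "k \<le> K"
  have H: "harm L - harm K > (0::real)" using harm_strict[OF a(1)] by simp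
  have "harm k \<le> (harm K :: real)" using a(2) by (rule harm_mono)
  then have "(harm L - harm k) / (harm L - harm K) \<ge> (1::real)" using H by (simp add: field_simps)
  then show ?thesis unfolding fcut_def clamp01_def by simp
qed

lemma fcut_zero: "K < L \<Longrightarrow> L \<le> k \<Longrightarrow> fcut K L k = 0"
proof -
  assume a: "K < L" "L \<le> k"
  have H: "harm L - harm K > (0::real)" using harm_strict[OF a(1)] by simp
  have "harm L \<le> (harm k :: real)" using a(2) by (rule harm_mono)
  then have "(harm L - harm k) / (harm L - harm K) \<le> (0::real)" using H by (simp add: divide_nonpos_pos)
  then show ?thesis unfolding fcut_def clamp01_def by simp
qed

lemma harm_diff_le:
  assumes "k \<ge> 1" "j \<le> k + 1" "k \<le> j + 1"
  shows "\<bar>harm j - harm k\<bar> \<le> (1 / real k :: real)"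
proof -
  consider "j = k + 1" | "j = k" | "k = j + 1" using assms by linarith
  then show ?thesis
  proof cases
    case 1
    then have "harm j - harm k = (inverse (real (Suc k)) :: real)" using harm_Suc[of k, where 'a=real] by simp
    moreover have "inverse (real (Suc k)) \<le> 1 / real k" using assms(1) by (simp add: field_simps)
    ultimately show ?thesis by simp
  next
    case 2 then show ?thesis by simp
  next
    case 3
    then have "harm k - harm j = (inverse (real k) :: real)" using harm_Suc[of j, where 'a=real] by simp
    have "\<bar>harm j - harm k\<bar> = \<bar>harm k - harm j :: real\<bar>" by (rule abs_minus_commute)
    also have "\<dots> = inverse (real k)" using \<open>harm k - harm j = inverse (real k)\<close> by simp
    finally show ?thesis by (simp add: divide_inverse)
  qed
qed

definition rz :: "int \<times> int \<Rightarrow> nat" where "rz p = nat (max \<bar>fst p\<bar> \<bar>snd p\<bar>)"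

lemma D6_small: "d \<in> D6 \<Longrightarrow> \<bar>fst d\<bar> \<le> 1 \<and> \<bar>snd d\<bar> \<le> 1"
  unfolding D6_def by auto

lemma max_abs_shift:
  fixes x y x' y' :: int
  assumes "\<bar>x' - x\<bar> \<le> 1" "\<bar>y' - y\<bar> \<le> 1"
  shows "max \<bar>x'\<bar> \<bar>y'\<bar> \<le> max \<bar>x\<bar> \<bar>y\<bar> + 1"
  using assms by (simp add: max_def abs_if split: if_splits)

lemma rz_nb:
  assumes "d \<in> D6"
  shows "rz (p + d) \<le> rz p + 1" "rz p \<le> rz (p + d) + 1"
proof -
  have s: "\<bar>fst d\<bar> \<le> 1" "\<bar>snd d\<bar> \<le> 1" using D6_small[OF assms] by auto
  have "max \<bar>fst (p + d)\<bar> \<bar>snd (p + d)\<bar> \<le> max \<bar>fst p\<bar> \<bar>snd p\<bar> + 1"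
    using s by (intro max_abs_shift) auto
  then show "rz (p + d) \<le> rz p + 1" unfolding rz_def by linarith
  have "max \<bar>fst p\<bar> \<bar>snd p\<bar> \<le> max \<bar>fst (p + d)\<bar> \<bar>snd (p + d)\<bar> + 1"
    using s by (intro max_abs_shift) auto
  then show "rz p \<le> rz (p + d) + 1" unfolding rz_def by linarith
qed

lemma shell_card: "card {p\<in>S. rz p = k} \<le> 8 * k + 4"
proof -
  define k' where "k' = int k"
  let ?A = "{-k', k'} \<times> {-k'..k'}" and ?B = "{-k'..k'} \<times> {-k', k'}"
  have sub: "{p\<in>S. rz p = k} \<subseteq> ?A \<union> ?B"
  proof
    fix p assume "p \<in> {p\<in>S. rz p = k}"
    then have "max \<bar>fst p\<bar> \<bar>snd p\<bar> = k'" unfolding rz_def k'_def by auto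
    then show "p \<in> ?A \<union> ?B" by (cases p) (auto simp: max_def abs_if split: if_splits)
  qed
  have c2: "card {-k', k'} \<le> 2" by (rule card_insert_le_m1) auto
  have ci: "card {-k'..k'} = 2 * k + 1" unfolding k'_def by simp
  have "card ?A = card {-k', k'} * (2 * k + 1)" unfolding card_cartesian_product ci ..
  moreover have "card {-k', k'} * (2 * k + 1) \<le> 2 * (2 * k + 1)" by (rule mult_le_mono1[OF c2])
  ultimately have cA: "card ?A \<le> 2 * (2 * k + 1)" by linarith
  have "card ?B = (2 * k + 1) * card {-k', k'}" unfolding card_cartesian_product ci ..
  moreover have "(2 * k + 1) * card {-k', k'} \<le> (2 * k + 1) * 2" by (rule mult_le_mono2[OF c2])
  ultimately have cB: "card ?B \<le> (2 * k + 1) * 2" by linarith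
  have "card {p\<in>S. rz p = k} \<le> card (?A \<union> ?B)" by (rule card_mono[OF _ sub]) auto
  moreover have "card (?A \<union> ?B) \<le> card ?A + card ?B" by (rule card_Un_le)
  ultimately show ?thesis using cA cB by presburger
qed

lemma shell_sum:
  fixes c :: "nat \<Rightarrow> real"
  assumes S: "finite S" and cnn: "\<And>k. c k \<ge> 0" and cz: "\<And>k. k \<notin> {K..L'} \<Longrightarrow> c k = 0"
  shows "(\<Sum>p\<in>S. c (rz p)) \<le> (\<Sum>k\<in>{K..L'}. (8 * real k + 4) * c k)"
proof -
  have "(\<Sum>p\<in>S. c (rz p)) = (\<Sum>k\<in>rz ` S. (\<Sum>p\<in>{p\<in>S. rz p = k}. c (rz p)))"
    using S by (intro sum.group[symmetric]) auto
  also have "\<dots> = (\<Sum>k\<in>rz ` S. real (card {p\<in>S. rz p = k}) * c k)"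
    by (intro sum.cong refl) simp
  also have "\<dots> \<le> (\<Sum>k\<in>rz ` S. (8 * real k + 4) * c k)"
  proof (intro sum_mono mult_right_mono cnn)
    fix k show "real (card {p\<in>S. rz p = k}) \<le> 8 * real k + 4"
      using shell_card[of S k] by linarith
  qed
  also have "\<dots> \<le> (\<Sum>k\<in>rz ` S \<union> {K..L'}. (8 * real k + 4) * c k)"
    using S cnn by (intro sum_mono2) auto
  also have "\<dots> = (\<Sum>k\<in>{K..L'}. (8 * real k + 4) * c k)"
    using S cz by (intro sum.mono_neutral_right) auto
  finally show ?thesis .
qed

lemma harm_split: "a \<le> b \<Longrightarrow> harm b - harm a = (\<Sum>k\<in>{Suc a..b}. 1 / real k :: real)"
proof (induction b)
  case 0 then show ?case by simp
next
  case (Suc b)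
  show ?case
  proof (cases "a = Suc b")
    case True then show ?thesis by simp
  next
    case False
    then have ab: "a \<le> b" using Suc.prems by simp
    have "{Suc a..Suc b} = insert (Suc b) {Suc a..b}" using ab by auto
    then have "(\<Sum>k\<in>{Suc a..Suc b}. 1 / real k :: real) = 1 / real (Suc b) + (\<Sum>k\<in>{Suc a..b}. 1 / real k)"
      by simp
    also have "\<dots> = 1 / real (Suc b) + (harm b - harm a)" using Suc.IH[OF ab] by simp
    also have "\<dots> = harm (Suc b) - harm a" by (simp add: harm_Suc divide_inverse)
    finally show ?thesis by simp
  qed
qed




definition cn :: "pt \<Rightarrow> real" where "cn x = (snd x - sqrt 3 / 6) * 2 / sqrt 3"
definition cm :: "pt \<Rightarrow> real" where "cm x = fst x - 1/2 - cn x / 2"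
definition rr :: "pt \<Rightarrow> nat" where "rr x = nat \<lceil>max \<bar>cm x\<bar> \<bar>cn x\<bar>\<rceil>"

lemma cn_P: "cn (P p) = of_int (snd p)"
  unfolding cn_def P_snd by (simp add: field_simps)

lemma cm_P: "cm (P p) = of_int (fst p)"
  unfolding cm_def cn_P P_fst by simp

lemma rr_P: "rr (P p) = rz p"
proof -
  have "max \<bar>cm (P p)\<bar> \<bar>cn (P p)\<bar> = of_int (max \<bar>fst p\<bar> \<bar>snd p\<bar>)"
    unfolding cm_P cn_P by (simp only: of_int_abs[symmetric] of_int_max)
  then show ?thesis unfolding rr_def rz_def by simp
qed

definition eta :: "nat \<Rightarrow> nat \<Rightarrow> pt \<Rightarrow> real" where "eta K L x = fcut K L (rr x)"

definition BB :: "(int \<times> int) \<times> (int \<times> int) \<Rightarrow> pt \<times> pt" where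
  "BB x = (P (fst x), P (fst x + snd x))"

lemma BB_inj: "inj BB"
proof (rule injI)
  fix x y assume "BB x = BB y"
  then have "P (fst x) = P (fst y)" "P (fst x + snd x) = P (fst y + snd y)" unfolding BB_def by auto
  then have "fst x = fst y" "fst x + snd x = fst y + snd y" using P_inj by (auto dest: injD)
  then show "x = y" by (simp add: prod_eq_iff)
qed

lemma Bonds_sub: "Bonds \<subseteq> BB ` (UNIV \<times> D6)"
proof
  fix b assume "b \<in> Bonds"
  then obtain p d where "d \<in> D6" "b = (P p, P (p + d))" using bond_form by blast
  then show "b \<in> BB ` (UNIV \<times> D6)" unfolding BB_def by (auto intro!: image_eqI[of _ _ "(p,d)"])
qed

definition cc :: "nat \<Rightarrow> nat \<Rightarrow> nat \<Rightarrow> real" where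
  "cc K L k = (if K \<le> k \<and> k \<le> L + 1 then (1 / (real k * (harm L - harm K)))\<^sup>2 else 0)"

lemma cc_nonneg: "cc K L k \<ge> 0" unfolding cc_def by simp

lemma TERM:
  assumes K: "1 \<le> K" "K < L" and d: "d \<in> D6"
  shows "(fcut K L (rz (p + d)) - fcut K L (rz p))\<^sup>2 \<le> cc K L (rz p)"
proof -
  define k where "k = rz p"
  define j where "j = rz (p + d)"
  have jk: "j \<le> k + 1" "k \<le> j + 1" using rz_nb[OF d, of p] unfolding j_def k_def by auto
  let ?H = "harm L - harm K :: real"
  have H: "?H > 0" using harm_strict[OF K(2)] by simp
  consider "k < K" | "k > L + 1" | "K \<le> k \<and> k \<le> L + 1" by linarith
  then show ?thesis
  proof cases
    case 1
    then have "fcut K L j = 1" "fcut K L k = 1" using jk K by (auto intro!: fcut_one)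
    then show ?thesis using cc_nonneg unfolding j_def k_def by simp
  next
    case 2
    then have "fcut K L j = 0" "fcut K L k = 0" using jk K by (auto intro!: fcut_zero)
    then show ?thesis using cc_nonneg unfolding j_def k_def by simp
  next
    case 3
    have k1: "k \<ge> 1" using 3 K by linarith
    have "\<bar>fcut K L j - fcut K L k\<bar> \<le> \<bar>harm j - harm k\<bar> / ?H" by (rule fcut_lip[OF K(2)])
    also have "\<dots> \<le> (1 / real k) / ?H" using harm_diff_le[OF k1 jk] H by (intro divide_right_mono) auto
    also have "\<dots> = 1 / (real k * ?H)" by simp
    finally have "\<bar>fcut K L j - fcut K L k\<bar>\<^sup>2 \<le> (1 / (real k * ?H))\<^sup>2"
      by (intro power_mono) auto
    then show ?thesis using 3 unfolding cc_def j_def k_def by simp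
  qed
qed

lemma card_D6: "card D6 = 6" unfolding D6_def by simp

lemma cap:
  assumes K: "1 \<le> K" "K < L" and G: "finite G" "G \<subseteq> Bonds"
  shows "(\<Sum>b\<in>G. (Dif (eta K L) b)\<^sup>2) \<le> 72 * ((harm L - harm K) + 2) / (harm L - harm K)\<^sup>2"
proof -
  let ?H = "harm L - harm K :: real"
  have H: "?H > 0" using harm_strict[OF K(2)] by simp
  define A where "A = BB -` G \<inter> (UNIV \<times> D6)"
  have Afin: "finite A" unfolding A_def using finite_vimageI[OF G(1) BB_inj] by auto
  have GA: "G = BB ` A" unfolding A_def using G(2) Bonds_sub by auto
  define g where "g b = (Dif (eta K L) b)\<^sup>2" for b
  have "(\<Sum>b\<in>G. g b) \<le> (\<Sum>x\<in>A. g (BB x))"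
    unfolding GA using Afin by (intro order_trans[OF sum_image_le]) (auto simp: g_def)
  also have "\<dots> \<le> (\<Sum>x\<in>A. cc K L (rz (fst x)))"
  proof (rule sum_mono)
    fix x assume "x \<in> A"
    then have d: "snd x \<in> D6" unfolding A_def by auto
    have "g (BB x) = (fcut K L (rz (fst x + snd x)) - fcut K L (rz (fst x)))\<^sup>2"
      unfolding g_def BB_def Dif_def eta_def by (simp add: rr_P)
    also have "\<dots> \<le> cc K L (rz (fst x))" by (rule TERM[OF K d])
    finally show "g (BB x) \<le> cc K L (rz (fst x))" .
  qed
  also have "\<dots> \<le> (\<Sum>x\<in>fst ` A \<times> D6. cc K L (rz (fst x)))"
  proof (rule sum_mono2)
    show "finite (fst ` A \<times> D6)" using Afin by (simp add: D6_def)
    show "A \<subseteq> fst ` A \<times> D6"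
    proof
      fix x assume x: "x \<in> A"
      then have "snd x \<in> D6" unfolding A_def by auto
      moreover have "fst x \<in> fst ` A" using x by (rule imageI)
      ultimately show "x \<in> fst ` A \<times> D6" by (simp add: mem_Times_iff)
    qed
    show "\<And>b. b \<in> fst ` A \<times> D6 - A \<Longrightarrow> 0 \<le> cc K L (rz (fst b))" by (rule cc_nonneg)
  qed
  also have "\<dots> = (\<Sum>p\<in>fst ` A. \<Sum>d\<in>D6. cc K L (rz p))"
    by (subst sum.cartesian_product) (simp add: case_prod_beta)
  also have "\<dots> = 6 * (\<Sum>p\<in>fst ` A. cc K L (rz p))"
    by (simp add: card_D6 sum_distrib_left)
  also have "(\<Sum>p\<in>fst ` A. cc K L (rz p)) \<le> (\<Sum>k\<in>{K..L+1}. (8 * real k + 4) * cc K L k)"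
    using Afin by (intro shell_sum cc_nonneg) (auto simp: cc_def)
  also have "\<dots> \<le> (\<Sum>k\<in>{K..L+1}. 12 / ?H\<^sup>2 * (1 / real k))"
  proof (rule sum_mono)
    fix k assume k: "k \<in> {K..L+1}"
    then have k1: "real k \<ge> 1" using K by auto
    have "(8 * real k + 4) * cc K L k = (8 * real k + 4) / (real k)\<^sup>2 / ?H\<^sup>2"
      using k unfolding cc_def by (simp add: power2_eq_square field_simps)
    also have "(8 * real k + 4) / (real k)\<^sup>2 \<le> 12 / real k"
      using k1 by (simp add: power2_eq_square field_simps)
    then have "(8 * real k + 4) / (real k)\<^sup>2 / ?H\<^sup>2 \<le> 12 / real k / ?H\<^sup>2"
      using H by (intro divide_right_mono) auto
    finally show "(8 * real k + 4) * cc K L k \<le> 12 / ?H\<^sup>2 * (1 / real k)" by (simp add: mult.commute)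
  qed
  also have "\<dots> = 12 / ?H\<^sup>2 * (\<Sum>k\<in>{K..L+1}. 1 / real k)" by (rule sum_distrib_left[symmetric])
  also have "(\<Sum>k\<in>{K..L+1}. 1 / real k) = harm (L+1) - harm (K - 1)"
  proof -
    have "harm (L+1) - harm (K - 1) = (\<Sum>k\<in>{Suc (K - 1)..L+1}. 1 / real k :: real)"
      using K by (intro harm_split) auto
    also have "Suc (K - 1) = K" using K by simp
    finally show ?thesis by simp
  qed
  finally have S1: "(\<Sum>b\<in>G. g b) \<le> 6 * (12 / ?H\<^sup>2 * (harm (L+1) - harm (K - 1)))" by simp
  have "harm (L+1) - harm (K - 1) \<le> ?H + 2"
  proof -
    have "harm (L+1) = harm L + inverse (real (Suc L) :: real)" using harm_Suc[of L, where 'a=real] by simp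
    moreover have "harm K = harm (K - 1) + inverse (real K :: real)"
      using harm_Suc[of "K - 1", where 'a=real] K by simp
    moreover have "inverse (real (Suc L)) \<le> (1::real)" by (simp add: inverse_le_1_iff)
    moreover have "inverse (real K) \<le> (1::real)" using K by (simp add: inverse_le_1_iff)
    ultimately show ?thesis by linarith
  qed
  then have "6 * (12 / ?H\<^sup>2 * (harm (L+1) - harm (K - 1))) \<le> 6 * (12 / ?H\<^sup>2 * (?H + 2))"
    by (intro mult_left_mono) auto
  then have "(\<Sum>b\<in>G. g b) \<le> 6 * (12 / ?H\<^sup>2 * (?H + 2))" using S1 by linarith
  then show ?thesis unfolding g_def by (simp add: field_simps)
qed




definition trunc :: "real \<Rightarrow> real \<Rightarrow> real" where "trunc M s = max (-M) (min M s)"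

lemma trunc_lip: "\<bar>trunc M s - trunc M t\<bar> \<le> \<bar>s - t\<bar>"
  unfolding trunc_def by (auto simp: max_def min_def abs_if)

lemma trunc_lip2: "\<bar>(trunc M s - s) - (trunc M t - t)\<bar> \<le> \<bar>s - t\<bar>"
  unfolding trunc_def by (auto simp: max_def min_def abs_if)

lemma trunc_id: "\<bar>s\<bar> \<le> M \<Longrightarrow> trunc M s = s"
  unfolding trunc_def by (simp add: max_def min_def abs_le_iff)

lemma trunc_bd: "M \<ge> 0 \<Longrightarrow> \<bar>trunc M s\<bar> \<le> M"
  unfolding trunc_def by (auto simp: max_def min_def abs_if)

lemma trunc_0: "M \<ge> 0 \<Longrightarrow> trunc M 0 = 0"
  unfolding trunc_def by simp

lemma sq3: "((a::real) + b + c)\<^sup>2 \<le> 3 * a\<^sup>2 + 3 * b\<^sup>2 + 3 * c\<^sup>2"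
proof -
  have "0 \<le> (a - b)\<^sup>2 + (b - c)\<^sup>2 + (a - c)\<^sup>2" by simp
  then show ?thesis by (simp add: power2_eq_square algebra_simps)
qed

lemma norm_P_le:
  assumes "rz p \<le> N"
  shows "norm (P p) \<le> 3 * real N + 2"
proof -
  have "max \<bar>fst p\<bar> \<bar>snd p\<bar> \<le> int N" using assms unfolding rz_def by linarith
  then have mi: "\<bar>fst p\<bar> \<le> int N" "\<bar>snd p\<bar> \<le> int N" by auto
  have m: "-real N \<le> real_of_int (fst p)" "real_of_int (fst p) \<le> real N"
          "-real N \<le> real_of_int (snd p)" "real_of_int (snd p) \<le> real N"
    using mi by (simp_all add: abs_le_iff)
  have s3: "sqrt 3 \<le> 2"
  proof -
    have "sqrt 3 \<le> sqrt 4" by (rule real_sqrt_le_mono) simp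
    then show ?thesis by simp
  qed
  have f: "\<bar>fst (P p)\<bar> \<le> 1/2 + real N + real N / 2"
    unfolding P_fst abs_le_iff using m by linarith
  have "\<bar>of_int (snd p) * (sqrt 3 / 2)\<bar> \<le> real N"
  proof -
    have "\<bar>of_int (snd p) * (sqrt 3 / 2)\<bar> = \<bar>of_int (snd p)\<bar> * (sqrt 3 / 2)" by (simp add: abs_mult)
    also have "\<dots> \<le> real N * 1" using mi s3 by (intro mult_mono) auto
    finally show ?thesis by simp
  qed
  then have "\<bar>of_int (snd p) * sqrt 3 / 2\<bar> \<le> real N" by simp
  moreover have "sqrt 3 / 6 \<le> 1" using s3 by simp
  moreover have "sqrt 3 / 6 \<ge> 0" by simp
  ultimately have s: "\<bar>snd (P p)\<bar> \<le> 1 + real N" unfolding P_snd abs_le_iff by linarith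
  have "norm (P p) \<le> norm (fst (P p)) + norm (snd (P p))"
    using norm_Pair_le[of "fst (P p)" "snd (P p)"] by simp
  then show ?thesis using f s by simp
qed

lemma harm_big: "\<exists>L::nat. harm L \<ge> (T::real)"
proof -
  define L where "L = nat \<lceil>exp T\<rceil>"
  have "exp T \<le> real L" unfolding L_def by linarith
  then have "exp T \<le> real L + 1" by simp
  moreover have "exp T > 0" by simp
  ultimately have "ln (exp T) \<le> ln (real L + 1)" by (subst ln_le_cancel_iff) auto
  then have "T \<le> ln (real L + 1)" by simp
  also have "\<dots> \<le> harm L" by (rule ln_le_harm)
  finally show ?thesis by blast
qed

lemma fcut_nz:
  assumes "K < L" "fcut K L k \<noteq> 0" shows "k < L"
proof (rule ccontr)
  assume "\<not> k < L"
  then have "L \<le> k" by simp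
  then have "fcut K L k = 0" by (rule fcut_zero[OF assms(1)])
  with assms(2) show False by simp
qed




lemma eta_range: "0 \<le> eta K L x" "eta K L x \<le> 1"
  unfolding eta_def fcut_def by (rule clamp_range)+

lemma bond_bound:
  fixes u v eta w :: "pt \<Rightarrow> real" and M :: real and b :: "pt \<times> pt"
  assumes v: "\<And>x. v x = trunc M (u x)" and w: "\<And>x. w x = eta x * v x"
      and M: "M \<ge> 0" and er: "\<And>x. 0 \<le> eta x \<and> eta x \<le> 1"
      and inF: "Q \<Longrightarrow> eta (snd b) = 1 \<and> \<bar>u (fst b)\<bar> \<le> M \<and> \<bar>u (snd b)\<bar> \<le> M"
  shows "(Dif (w - u) b)\<^sup>2 \<le> (if Q then 0 else 6 * (Dif u b)\<^sup>2) + 3 * M\<^sup>2 * (Dif eta b)\<^sup>2"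
proof -
  define p where "p = fst b"
  define q where "q = snd b"
  define X where "X = (eta q - 1) * (v q - v p)"
  define Y where "Y = (eta q - eta p) * v p"
  define Z where "Z = (v q - u q) - (v p - u p)"
  have eq: "Dif (w - u) b = X + Y + Z"
    unfolding Dif_def X_def Y_def Z_def p_def q_def using w by (simp add: algebra_simps)
  have Du: "Dif u b = u q - u p" unfolding Dif_def p_def q_def ..
  have De: "Dif eta b = eta q - eta p" unfolding Dif_def p_def q_def ..
  have vq: "\<bar>v q - v p\<bar> \<le> \<bar>u q - u p\<bar>" unfolding v by (rule trunc_lip)
  have Zb: "\<bar>Z\<bar> \<le> \<bar>u q - u p\<bar>" unfolding Z_def v by (rule trunc_lip2)
  have vp: "\<bar>v p\<bar> \<le> M" unfolding v using M by (rule trunc_bd)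
  have e1: "\<bar>eta q - 1\<bar> \<le> 1" using er[of q] by auto
  have X2: "X\<^sup>2 \<le> (Dif u b)\<^sup>2"
  proof -
    have "\<bar>X\<bar> \<le> 1 * \<bar>u q - u p\<bar>" unfolding X_def abs_mult using e1 vq by (intro mult_mono) auto
    then have "\<bar>X\<bar>\<^sup>2 \<le> \<bar>u q - u p\<bar>\<^sup>2" by (intro power_mono) auto
    then show ?thesis unfolding Du by simp
  qed
  have Y2: "Y\<^sup>2 \<le> M\<^sup>2 * (Dif eta b)\<^sup>2"
  proof -
    have "\<bar>Y\<bar> \<le> \<bar>eta q - eta p\<bar> * M" unfolding Y_def abs_mult using vp by (intro mult_left_mono) auto
    then have "\<bar>Y\<bar>\<^sup>2 \<le> (\<bar>eta q - eta p\<bar> * M)\<^sup>2" by (intro power_mono) auto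
    then show ?thesis unfolding De by (simp add: power_mult_distrib mult.commute)
  qed
  have Z2: "Z\<^sup>2 \<le> (Dif u b)\<^sup>2"
  proof -
    have "\<bar>Z\<bar>\<^sup>2 \<le> \<bar>u q - u p\<bar>\<^sup>2" using Zb by (intro power_mono) auto
    then show ?thesis unfolding Du by simp
  qed
  have Mnn: "0 \<le> M\<^sup>2 * (Dif eta b)\<^sup>2" by simp
  show ?thesis
  proof (cases Q)
    case True
    then have h: "eta q = 1" "\<bar>u p\<bar> \<le> M" "\<bar>u q\<bar> \<le> M" using inF unfolding p_def q_def by auto
    have "X = 0" unfolding X_def using h by simp
    moreover have "Z = 0" unfolding Z_def v using h by (simp add: trunc_id)
    ultimately have "(Dif (w - u) b)\<^sup>2 = Y\<^sup>2" unfolding eq by simp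
    also have "\<dots> \<le> 3 * (M\<^sup>2 * (Dif eta b)\<^sup>2)" using Y2 Mnn by linarith
    finally show ?thesis using True by simp
  next
    case False
    have "(Dif (w - u) b)\<^sup>2 \<le> 3 * X\<^sup>2 + 3 * Y\<^sup>2 + 3 * Z\<^sup>2" unfolding eq by (rule sq3)
    also have "\<dots> \<le> 6 * (Dif u b)\<^sup>2 + 3 * (M\<^sup>2 * (Dif eta b)\<^sup>2)" using X2 Y2 Z2 by linarith
    finally show ?thesis using False by simp
  qed
qed

lemma DENSE':
  assumes u: "u \<in> W12" and e: "e > 0"
  shows "\<exists>w\<in>W0. normD (w - u) < e"
proof -
  have uW: "\<forall>x. x \<notin> Lam \<longrightarrow> u x = 0" "u xi0 = 0" "(\<lambda>b. (Dif u b)\<^sup>2) summable_on Bonds"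
    using u unfolding W12_def by auto
  define \<tau> where "\<tau> = e\<^sup>2 / 8"
  have \<tau>: "\<tau> > 0" unfolding \<tau>_def using e by simp
  obtain F0 where F0: "finite F0" "F0 \<subseteq> Bonds"
      "\<forall>G. finite G \<longrightarrow> G \<subseteq> Bonds - F0 \<longrightarrow> (\<Sum>b\<in>G. (Dif u b)\<^sup>2) < \<tau>"
    using I4[OF uW(3) _ \<tau>] by auto
  define MS where "MS = insert 0 ((\<lambda>b. \<bar>u (fst b)\<bar>) ` F0 \<union> (\<lambda>b. \<bar>u (snd b)\<bar>) ` F0)"
  have MSf: "finite MS" unfolding MS_def using F0(1) by simp
  define M where "M = Max MS"
  have M0: "M \<ge> 0" unfolding M_def using MSf by (intro Max_ge) (auto simp: MS_def)
  have Mb: "\<bar>u (fst b)\<bar> \<le> M" "\<bar>u (snd b)\<bar> \<le> M" if "b \<in> F0" for b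
    unfolding M_def using MSf that by (auto intro!: Max_ge simp: MS_def)
  define v where "v x = trunc M (u x)" for x
  define KS where "KS = insert 1 ((\<lambda>b. rr (snd b)) ` F0)"
  have KSf: "finite KS" unfolding KS_def using F0(1) by simp
  define K where "K = Max KS"
  have K1: "1 \<le> K" unfolding K_def using KSf by (intro Max_ge) (auto simp: KS_def)
  have Kb: "rr (snd b) \<le> K" if "b \<in> F0" for b
    unfolding K_def using KSf that by (auto intro!: Max_ge simp: KS_def)
  define T0 where "T0 = 2 + 432 * M\<^sup>2 / \<tau>"
  have T0: "T0 \<ge> 2" "432 * M\<^sup>2 \<le> \<tau> * T0"
  proof -
    show "T0 \<ge> 2" unfolding T0_def using \<tau> by simp
    have "\<tau> * T0 = 2 * \<tau> + 432 * M\<^sup>2" unfolding T0_def using \<tau> by (simp add: field_simps)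
    then show "432 * M\<^sup>2 \<le> \<tau> * T0" using \<tau> by simp
  qed
  obtain L where hL: "harm L \<ge> harm K + T0" using harm_big[of "harm K + T0"] by blast
  have KL: "K < L"
  proof (rule ccontr)
    assume "\<not> K < L"
    then have "harm L \<le> (harm K :: real)" by (intro harm_mono) simp
    then show False using hL T0 by linarith
  qed
  define H :: real where "H = harm L - harm K"
  have H: "H \<ge> T0" "H > 0" unfolding H_def using hL T0 by linarith+
  define \<eta> where "\<eta> = eta K L"
  define w where "w x = \<eta> x * v x" for x
  have capb: "3 * M\<^sup>2 * (\<Sum>b\<in>G. (Dif \<eta> b)\<^sup>2) \<le> \<tau>" if G: "finite G" "G \<subseteq> Bonds" for G
  proof -
    have "(\<Sum>b\<in>G. (Dif \<eta> b)\<^sup>2) \<le> 72 * (H + 2) / H\<^sup>2"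
      unfolding \<eta>_def H_def by (rule cap[OF K1 KL G])
    also have "\<dots> \<le> 144 / H"
    proof -
      have "72 * (H + 2) \<le> 144 * H" using H T0 by (simp add: distrib_left)
      then have "72 * (H + 2) / H\<^sup>2 \<le> 144 * H / H\<^sup>2" using H by (intro divide_right_mono) auto
      also have "144 * H / H\<^sup>2 = 144 / H" using H by (simp add: power2_eq_square)
      finally show ?thesis .
    qed
    finally have "3 * M\<^sup>2 * (\<Sum>b\<in>G. (Dif \<eta> b)\<^sup>2) \<le> 3 * M\<^sup>2 * (144 / H)"
      by (intro mult_left_mono) auto
    also have "3 * M\<^sup>2 * (144 / H) = 432 * M\<^sup>2 / H" by simp
    also have "\<dots> \<le> \<tau>"
    proof -
      have "432 * M\<^sup>2 \<le> \<tau> * H" using T0(2) H \<tau> by (smt (verit) mult_left_mono)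
      then show ?thesis using H by (simp add: divide_le_eq mult.commute)
    qed
    finally show ?thesis .
  qed
  have er: "0 \<le> \<eta> x \<and> \<eta> x \<le> 1" for x unfolding \<eta>_def using eta_range by auto
  have bb: "(Dif (w - u) b)\<^sup>2 \<le> (if b \<in> F0 then 0 else 6 * (Dif u b)\<^sup>2) + 3 * M\<^sup>2 * (Dif \<eta> b)\<^sup>2" for b
  proof (rule bond_bound[where v=v])
    show "\<And>x. v x = trunc M (u x)" by (simp add: v_def)
    show "\<And>x. w x = \<eta> x * v x" by (simp add: w_def)
    show "M \<ge> 0" by (rule M0)
    show "\<And>x. 0 \<le> \<eta> x \<and> \<eta> x \<le> 1" by (rule er)
    assume bF: "b \<in> F0"
    have "fcut K L (rr (snd b)) = 1" using Kb[OF bF] by (rule fcut_one[OF KL])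
    then show "\<eta> (snd b) = 1 \<and> \<bar>u (fst b)\<bar> \<le> M \<and> \<bar>u (snd b)\<bar> \<le> M"
      using Mb[OF bF] unfolding \<eta>_def eta_def by simp
  qed
  have sumb: "(\<Sum>b\<in>G. (Dif (w - u) b)\<^sup>2) \<le> 7 * \<tau>" if G: "finite G" "G \<subseteq> Bonds" for G
  proof -
    have "(\<Sum>b\<in>G. (Dif (w - u) b)\<^sup>2) \<le> (\<Sum>b\<in>G. (if b \<in> F0 then 0 else 6 * (Dif u b)\<^sup>2) + 3 * M\<^sup>2 * (Dif \<eta> b)\<^sup>2)"
      by (intro sum_mono bb)
    also have "\<dots> = (\<Sum>b\<in>G. (if b \<in> F0 then 0 else 6 * (Dif u b)\<^sup>2)) + 3 * M\<^sup>2 * (\<Sum>b\<in>G. (Dif \<eta> b)\<^sup>2)"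
      by (simp add: sum.distrib sum_distrib_left)
    also have "(\<Sum>b\<in>G. (if b \<in> F0 then 0 else 6 * (Dif u b)\<^sup>2)) = 6 * (\<Sum>b\<in>G - F0. (Dif u b)\<^sup>2)"
    proof -
      have "(\<Sum>b\<in>G. (if b \<in> F0 then 0 else 6 * (Dif u b)\<^sup>2)) = (\<Sum>b\<in>G - F0. 6 * (Dif u b)\<^sup>2)"
        using G(1) by (intro sum.mono_neutral_cong_right) auto
      then show ?thesis by (simp add: sum_distrib_left)
    qed
    also have "(\<Sum>b\<in>G - F0. (Dif u b)\<^sup>2) < \<tau>" using F0(3) G by auto
    finally show ?thesis using capb[OF G] by linarith
  qed
  have nD: "normD (w - u) < e"
  proof (rule normD_less[OF e])
    show "7 * \<tau> < e\<^sup>2" unfolding \<tau>_def using e by simp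
    show "\<And>F. finite F \<Longrightarrow> F \<subseteq> Bonds \<Longrightarrow> (\<Sum>b\<in>F. (Dif (w - u) b)\<^sup>2) \<le> 7 * \<tau>" by (rule sumb)
  qed
  have w_off: "w x = 0" if "x \<notin> Lam" for x
  proof -
    have "u x = 0" using uW(1) that by blast
    then show ?thesis using M0 unfolding w_def v_def by (simp add: trunc_0)
  qed
  have w_xi0: "w xi0 = 0" using uW(2) M0 unfolding w_def v_def by (simp add: trunc_0)
  define R where "R = 3 * real L + 3"
  have nzb: "norm x \<le> 3 * real L + 2" if "x \<in> Lam" "w x \<noteq> 0" for x
  proof -
    have "x \<in> range P" using that(1) Lam_eq by simp
    then obtain p where p: "x = P p" by blast
    have "\<eta> x \<noteq> 0" using that(2) unfolding w_def by auto
    then have "rr x < L" unfolding \<eta>_def eta_def by (rule fcut_nz[OF KL])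
    then have "rz p \<le> L" using p rr_P by simp
    then show ?thesis using p norm_P_le by blast
  qed
  have dist1: "norm y \<le> norm x + 1" if "dist x y = 1" for x y :: pt
  proof -
    have "norm y \<le> norm x + norm (y - x)" by (rule norm_triangle_sub)
    also have "norm (y - x) = dist x y" by (simp add: dist_norm norm_minus_commute)
    finally show ?thesis using that by simp
  qed
  have "{b\<in>Bonds. Dif w b \<noteq> 0} \<subseteq> cball 0 R \<times> cball 0 R"
  proof
    fix b assume b: "b \<in> {b\<in>Bonds. Dif w b \<noteq> 0}"
    then obtain x y where xy: "b = (x, y)" "x \<in> Lam" "y \<in> Lam" "dist x y = 1" "w y - w x \<noteq> 0"
      unfolding Bonds_def Dif_def by auto
    have d2: "dist y x = 1" using xy(4) by (simp add: dist_commute)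
    have "w x \<noteq> 0 \<or> w y \<noteq> 0" using xy(5) by auto
    then have "norm x \<le> R \<and> norm y \<le> R"
    proof
      assume "w x \<noteq> 0"
      then have "norm x \<le> 3 * real L + 2" using nzb xy(2) by blast
      then show ?thesis using dist1[OF xy(4)] unfolding R_def by linarith
    next
      assume "w y \<noteq> 0"
      then have "norm y \<le> 3 * real L + 2" using nzb xy(3) by blast
      then show ?thesis using dist1[OF d2] unfolding R_def by linarith
    qed
    then show "b \<in> cball 0 R \<times> cball 0 R" using xy(1) by auto
  qed
  then have "bounded {b\<in>Bonds. Dif w b \<noteq> 0}"
    by (rule bounded_subset[rotated]) (intro bounded_Times bounded_cball)
  then have "w \<in> W0" unfolding W0_def using w_off w_xi0 by auto
  then show ?thesis using nD by blast
qed




lemma DENSE: "u \<in> W12 \<Longrightarrow> e > 0 \<Longrightarrow> \<exists>w\<in>W0. normD (w - u) < e"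
  by (rule DENSE')

lemma lin4: "(a::real) \<le> 2*(b+c) \<Longrightarrow> b < D/4 \<Longrightarrow> c < D/4 \<Longrightarrow> a < D" by (simp add: field_simps)

lemma minus_zero_fun: "w - (\<lambda>_. 0::real) = w" by (rule ext) simp

lemma UC:
  fixes \<psi> :: "real \<Rightarrow> real" and \<epsilon> :: real and yhat :: "pt \<Rightarrow> real"
  assumes psi_cont: "continuous_on UNIV \<psi>"
      and psi_C4: "C4_on (- half_ints) \<psi>"
      and psi1: "\<forall>x. \<psi> (x + 1) = \<psi> x"
      and eps: "\<epsilon> > 0" "\<forall>b\<in>Bonds. infdist (Dif yhat b) half_ints \<ge> \<epsilon>"
      and bdd: "\<exists>C. \<forall>v\<in>W0. dE0 \<psi> yhat v \<le> C * normD v"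
      and u: "u \<in> W12" and e: "e > 0"
  shows "\<exists>d>0. \<forall>w1\<in>W0. \<forall>w2\<in>W0. normD (w1 - u) < d \<longrightarrow> normD (w2 - u) < d \<longrightarrow>
           \<bar>energy \<psi> yhat w1 - energy \<psi> yhat w2\<bar> < e"
proof -
  define A where "A = 2 * (normD u + 1)"
  have A: "A > 0" unfolding A_def using normD_nonneg[of u] by simp
  obtain d' where d': "d' > 0" "\<forall>w1\<in>W0. \<forall>w2\<in>W0. normD w1 \<le> A \<longrightarrow> normD w2 \<le> A \<longrightarrow> normD (w1 - w2) < d' \<longrightarrow>
           \<bar>energy \<psi> yhat w1 - energy \<psi> yhat w2\<bar> < e"
    using KEY[OF psi_cont psi_C4 psi1 eps bdd A e] by blast
  define d where "d = min 1 (d'/4)"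
  have d: "d > 0" "d \<le> 1" "4 * d \<le> d'" unfolding d_def using d' by auto
  have z: "(\<lambda>_. 0::real) \<in> W12" using W0_zero W0_W12 by blast
  have nb: "normD w \<le> A" if w: "w \<in> W0" "normD (w - u) < d" for w
  proof -
    have "normD (w - (\<lambda>_. 0)) \<le> 2 * (normD (w - u) + normD (u - (\<lambda>_. 0)))"
      using W12_quasi[OF W0_W12[OF w(1)] u z] .
    then have "normD w \<le> 2 * (normD (w - u) + normD u)" by (simp only: minus_zero_fun)
    moreover have "normD (w - u) + normD u \<le> normD u + 1" using w(2) d(2) by linarith
    then have "2 * (normD (w - u) + normD u) \<le> 2 * (normD u + 1)" by simp
    ultimately show ?thesis unfolding A_def by (rule order_trans)
  qed
  have "\<forall>w1\<in>W0. \<forall>w2\<in>W0. normD (w1 - u) < d \<longrightarrow> normD (w2 - u) < d \<longrightarrow>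
           \<bar>energy \<psi> yhat w1 - energy \<psi> yhat w2\<bar> < e"
  proof (intro ballI impI)
    fix w1 w2 assume w: "w1 \<in> W0" "w2 \<in> W0" and n: "normD (w1 - u) < d" "normD (w2 - u) < d"
    have "normD (w1 - w2) \<le> 2 * (normD (w1 - u) + normD (u - w2))"
      using W12_quasi[OF W0_W12[OF w(1)] u W0_W12[OF w(2)]] .
    also have "normD (u - w2) = normD (w2 - u)" by (rule normD_sym)
    finally have q: "normD (w1 - w2) \<le> 2 * (normD (w1 - u) + normD (w2 - u))" .
    have "normD (w1 - u) < (4*d)/4" "normD (w2 - u) < (4*d)/4" using n by simp_all
    then have "normD (w1 - w2) < 4 * d" by (rule lin4[OF q])
    then show "\<bar>energy \<psi> yhat w1 - energy \<psi> yhat w2\<bar> < e"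
      using d'(2) w nb[OF w(1) n(1)] nb[OF w(2) n(2)] d(3) by force
  qed
  then show ?thesis using d(1) by blast
qed

theorem lemma4p1:
  fixes \<psi> :: "real \<Rightarrow> real" and \<mu> \<epsilon> :: real and yhat :: "pt \<Rightarrow> real"
  assumes psi_cont: "continuous_on UNIV \<psi>"
      and psi_C4: "C4_on (- half_ints) \<psi>"
      and psi1: "\<forall>x. \<psi> (x + 1) = \<psi> x"
      and psi2: "\<forall>x. \<psi> (- x) = \<psi> x" "\<forall>x. \<psi> (1/2 + (- x)) = \<psi> (1/2 + x)"
      and psi3: "\<forall>r. \<psi> r = 0 \<longleftrightarrow> r \<in> \<int>"
      and psi4: "(deriv ^^ 2) \<psi> 0 = \<mu>" "\<mu> > 0"
      and psi5: "\<forall>x\<in>{-1/2..1/2}. \<psi> x \<ge> 1/2 * \<mu> * x\<^sup>2"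
      and eps: "\<epsilon> > 0" "\<forall>b\<in>Bonds. infdist (Dif yhat b) half_ints \<ge> \<epsilon>"
      and bdd: "\<exists>C. \<forall>v\<in>W0. dE0 \<psi> yhat v \<le> C * normD v"
  shows "contD_on W0 (energy \<psi> yhat) \<and>
         (\<exists>Eb. (\<forall>u\<in>W0. Eb u = energy \<psi> yhat u) \<and> contD_on W12 Eb \<and>
              (\<forall>F. (\<forall>u\<in>W0. F u = energy \<psi> yhat u) \<and> contD_on W12 F \<longrightarrow>
                   (\<forall>u\<in>W12. F u = Eb u)))"
proof -
  define E where "E = energy \<psi> yhat"
  have uc: "\<And>u e. u \<in> W12 \<Longrightarrow> e > 0 \<Longrightarrow> \<exists>d>0. \<forall>w1\<in>W0. \<forall>w2\<in>W0. normD (w1 - u) < d \<longrightarrow> normD (w2 - u) < d \<longrightarrow>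
           \<bar>E w1 - E w2\<bar> < e"
    unfolding E_def using UC[OF psi_cont psi_C4 psi1 eps bdd] by blast
  have z0: "normD (u - u) = 0" for u
    unfolding normD_def by simp
  have part1: "contD_on W0 E"
    unfolding contD_on_def
  proof (intro ballI allI impI)
    fix u e assume u: "u \<in> W0" and e: "(e::real) > 0"
    obtain d where d: "d > 0" "\<forall>w1\<in>W0. \<forall>w2\<in>W0. normD (w1 - u) < d \<longrightarrow> normD (w2 - u) < d \<longrightarrow> \<bar>E w1 - E w2\<bar> < e"
      using uc[OF W0_W12[OF u] e] by blast
    show "\<exists>d>0. \<forall>w\<in>W0. normD (w - u) < d \<longrightarrow> \<bar>E w - E u\<bar> < e"
      using d u z0[of u] by (intro exI[of _ d]) auto
  qed
  define ws where "ws u n = (SOME w. w \<in> W0 \<and> normD (w - u) < 1 / (Suc n))" for u n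
  have ws: "ws u n \<in> W0" "normD (ws u n - u) < 1 / Suc n" if "u \<in> W12" for u n
  proof -
    have "\<exists>w. w \<in> W0 \<and> normD (w - u) < 1 / (Suc n)" using DENSE[OF that, of "1 / Suc n"] by auto
    then have "ws u n \<in> W0 \<and> normD (ws u n - u) < 1 / (Suc n)" unfolding ws_def by (rule someI_ex)
    then show "ws u n \<in> W0" "normD (ws u n - u) < 1 / Suc n" by auto
  qed
  have small: "\<exists>N. \<forall>n\<ge>N. 1 / real (Suc n) < d" if "d > 0" for d :: real
  proof -
    obtain N :: nat where N: "1 / d < N" using reals_Archimedean2 by blast
    have "1 / real (Suc n) < d" if "n \<ge> N" for n
    proof -
      have "1 / d < real (Suc n)" using N that by linarith
      then show ?thesis using \<open>d > 0\<close> by (simp add: field_simps)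
    qed
    then show ?thesis by blast
  qed
  define Eb where "Eb u = lim (\<lambda>n. E (ws u n))" for u
  have Q: "\<exists>d>0. \<forall>w\<in>W0. normD (w - u) < d \<longrightarrow> \<bar>E w - Eb u\<bar> < e" if u: "u \<in> W12" and e: "e > 0" for u e
  proof -
    have cau: "Cauchy (\<lambda>n. E (ws u n))"
    proof (rule metric_CauchyI)
      fix r :: real assume r: "r > 0"
      obtain d where d: "d > 0" "\<forall>w1\<in>W0. \<forall>w2\<in>W0. normD (w1 - u) < d \<longrightarrow> normD (w2 - u) < d \<longrightarrow> \<bar>E w1 - E w2\<bar> < r"
        using uc[OF u r] by blast
      obtain N where N: "\<forall>n\<ge>N. 1 / real (Suc n) < d" using small[OF d(1)] by blast
      have "\<forall>m\<ge>N. \<forall>n\<ge>N. dist (E (ws u m)) (E (ws u n)) < r"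
      proof (intro allI impI)
        fix m n assume "m \<ge> N" "n \<ge> N"
        then have "normD (ws u m - u) < d" "normD (ws u n - u) < d" using ws[OF u] N
          by (meson less_trans)+
        then show "dist (E (ws u m)) (E (ws u n)) < r" using d(2) ws[OF u] by (simp add: dist_real_def)
      qed
      then show "\<exists>N. \<forall>m\<ge>N. \<forall>n\<ge>N. dist (E (ws u m)) (E (ws u n)) < r" by blast
    qed
    then have lim: "(\<lambda>n. E (ws u n)) \<longlonglongrightarrow> Eb u" unfolding Eb_def
      using Cauchy_convergent convergent_LIMSEQ_iff by blast
    obtain d where d: "d > 0" "\<forall>w1\<in>W0. \<forall>w2\<in>W0. normD (w1 - u) < d \<longrightarrow> normD (w2 - u) < d \<longrightarrow> \<bar>E w1 - E w2\<bar> < e/2"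
      using uc[OF u, of "e/2"] e by auto
    obtain N1 where N1: "\<forall>n\<ge>N1. 1 / real (Suc n) < d" using small[OF d(1)] by blast
    obtain N2 where N2: "\<forall>n\<ge>N2. dist (E (ws u n)) (Eb u) < e/2"
      using lim e unfolding LIMSEQ_def by (meson half_gt_zero)
    define n where "n = max N1 N2"
    have n: "normD (ws u n - u) < d" "\<bar>E (ws u n) - Eb u\<bar> < e/2"
      using N1 N2 ws[OF u, of n] unfolding n_def by (auto simp: dist_real_def intro: less_trans)
    have "\<forall>w\<in>W0. normD (w - u) < d \<longrightarrow> \<bar>E w - Eb u\<bar> < e"
    proof (intro ballI impI)
      fix w assume w: "w \<in> W0" "normD (w - u) < d"
      then have "\<bar>E w - E (ws u n)\<bar> < e/2" using d(2) n(1) ws[OF u, of n] by blast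
      then show "\<bar>E w - Eb u\<bar> < e" using n(2) by linarith
    qed
    then show ?thesis using d(1) by blast
  qed
  have agree: "Eb u = E u" if u: "u \<in> W0" for u
  proof (rule ccontr)
    assume ne: "Eb u \<noteq> E u"
    obtain d where d: "d > 0" "\<forall>w\<in>W0. normD (w - u) < d \<longrightarrow> \<bar>E w - Eb u\<bar> < \<bar>Eb u - E u\<bar>"
      using Q[OF W0_W12[OF u], of "\<bar>Eb u - E u\<bar>"] ne by auto
    then show False using u z0[of u] by force
  qed
  have contEb: "contD_on W12 Eb"
    unfolding contD_on_def
  proof (intro ballI allI impI)
    fix u e assume u: "u \<in> W12" and e: "(e::real) > 0"
    obtain d1 where d1: "d1 > 0" "\<forall>w\<in>W0. normD (w - u) < d1 \<longrightarrow> \<bar>E w - Eb u\<bar> < e/3"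
      using Q[OF u, of "e/3"] e by auto
    have "\<forall>w\<in>W12. normD (w - u) < d1/4 \<longrightarrow> \<bar>Eb w - Eb u\<bar> < e"
    proof (intro ballI impI)
      fix w assume w: "w \<in> W12" "normD (w - u) < d1/4"
      obtain d2 where d2: "d2 > 0" "\<forall>z\<in>W0. normD (z - w) < d2 \<longrightarrow> \<bar>E z - Eb w\<bar> < e/3"
        using Q[OF w(1), of "e/3"] e by auto
      obtain z where z: "z \<in> W0" "normD (z - w) < min d2 (d1/4)"
        using DENSE[OF w(1), of "min d2 (d1/4)"] d1 d2 by auto
      have "normD (z - u) \<le> 2 * (normD (z - w) + normD (w - u))"
        using W12_quasi[OF W0_W12[OF z(1)] w(1) u] .
      moreover have "normD (z - w) < d1/4" using z(2) by simp
      ultimately have "normD (z - u) < d1" using w(2) lin4 by blast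
      then have "\<bar>E z - Eb u\<bar> < e/3" using d1 z by blast
      moreover have "\<bar>E z - Eb w\<bar> < e/3" using d2 z by auto
      ultimately show "\<bar>Eb w - Eb u\<bar> < e" by linarith
    qed
    then show "\<exists>d>0. \<forall>w\<in>W12. normD (w - u) < d \<longrightarrow> \<bar>Eb w - Eb u\<bar> < e" using d1(1)
      by (intro exI[of _ "d1/4"]) auto
  qed
  have uniq: "\<forall>F. (\<forall>u\<in>W0. F u = E u) \<and> contD_on W12 F \<longrightarrow> (\<forall>u\<in>W12. F u = Eb u)"
  proof (intro allI impI ballI)
    fix F u assume FF: "(\<forall>u\<in>W0. F u = E u) \<and> contD_on W12 F" and u: "u \<in> W12"
    show "F u = Eb u"
    proof (rule ccontr)
      assume ne: "F u \<noteq> Eb u"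
      define e where "e = \<bar>F u - Eb u\<bar> / 2"
      have e: "e > 0" unfolding e_def using ne by simp
      obtain d1 where d1: "d1 > 0" "\<forall>w\<in>W12. normD (w - u) < d1 \<longrightarrow> \<bar>F w - F u\<bar> < e"
        using FF u e unfolding contD_on_def by blast
      obtain d2 where d2: "d2 > 0" "\<forall>w\<in>W0. normD (w - u) < d2 \<longrightarrow> \<bar>E w - Eb u\<bar> < e"
        using Q[OF u e] by blast
      obtain z where z: "z \<in> W0" "normD (z - u) < min d1 d2"
        using DENSE[OF u, of "min d1 d2"] d1 d2 by auto
      have "\<bar>F z - F u\<bar> < e" using d1 z W0_W12 by auto
      moreover have "\<bar>E z - Eb u\<bar> < e" using d2 z by auto
      moreover have "F z = E z" using FF z by auto
      ultimately have "\<bar>F u - Eb u\<bar> < 2 * e"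
      proof -
        assume a1: "\<bar>F z - F u\<bar> < e" and a2: "\<bar>E z - Eb u\<bar> < e" and a3: "F z = E z"
        have "F u - Eb u = (F u - F z) + (E z - Eb u)" using a3 by simp
        then have "\<bar>F u - Eb u\<bar> \<le> \<bar>F u - F z\<bar> + \<bar>E z - Eb u\<bar>" by (metis abs_triangle_ineq)
        moreover have "\<bar>F u - F z\<bar> = \<bar>F z - F u\<bar>" by (rule abs_minus_commute)
        ultimately show ?thesis using a1 a2 by linarith
      qed
      then show False unfolding e_def by simp
    qed
  qed
  show ?thesis
    unfolding E_def[symmetric]
    using part1 agree contEb uniq by (intro conjI exI[of _ Eb]) auto
qed


end
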